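(* Let $A\in\mathbb{Z}^{d\times n}$ be totally unimodular, $\mathbf{b}\in\mathbb{Z}^d$, $\mathbf{c}\in\mathbb{Z}^n$, $\mathbf{u}\in\mathbb{Z}_{\ge0}^n$, and consider the ILP $\min\{\mathbf{c}^\top\mathbf{x} : A\mathbf{x}=\mathbf{b},\ \mathbf{0}\le\mathbf{x}\le\mathbf{u},\ \mathbf{x}\in\mathbb{Z}^n\}$. Let $m$ be the number of distinct positive values of $-\mathbf{c}^\top\mathbf{z}/\|\mathbf{z}\|_1$ as $\mathbf{z}$ ranges over $\mathcal{C}(A)$. Then from any feasible solution, every sequence of discrete steepest-descent augmentations (with respect to $\mathcal{G}(A)$) reaches an optimal solution after at most $n\cdot m$ augmentations.
   Context: The circuits $\mathcal{C}(A)$: for each nonzero $\mathbf{z}\in\ker(A)$ with inclusion-minimal support among nonzero vectors of $\ker(A)$, the line $\mathbb{R}\mathbf{z}$ contains exactly two nonzero integer points closest to the origin; $\mathcal{C}(A)$ is the set of all these vectors. For $\mathbf{v},\mathbf{w}\in\mathbb{R}^n$ write $\mathbf{v}\sqsubseteq\mathbf{w}$ if $v_iw_i\ge0$ and $|v_i|\le|w_i|$ for all $i$; the Graver basis $\mathcal{G}(A)$ is the set of $\sqsubseteq$-minimal elements of $(\ker(A)\cap\mathbb{Z}^n)\setminus\{\mathbf{0}\}$. Discrete steepest-descent augmentation (ILP): given a feasible $\mathbf{x}_k$, choose $\mathbf{z}\in\mathcal{G}(A)$ maximizing $-\mathbf{c}^\top\mathbf{z}/\|\mathbf{z}\|_1$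 among all $\mathbf{z}\in\mathcal{G}(A)$ with $\mathbf{x}_k+\mathbf{z}$ feasible; if this maximum is positive, let $\alpha$ be the largest integer with $\mathbf{x}_k+\alpha\mathbf{z}$ feasible and set $\mathbf{x}_{k+1}:=\mathbf{x}_k+\alpha\mathbf{z}$, otherwise stop. *)

theory Defs
  imports "Jordan_Normal_Form.Determinant" "Jordan_Normal_Form.DL_Submatrix"
begin

definition totally_unimodular :: "int mat \<Rightarrow> bool" where
  "totally_unimodular A \<longleftrightarrow>
     (\<forall>I J. I \<subseteq> {..<dim_row A} \<longrightarrow> J \<subseteq> {..<dim_col A} \<longrightarrow> card I = card J \<longrightarrow>
        det (submatrix A I J) \<in> {-1, 0, 1})"

definition supp :: "'a::zero vec \<Rightarrow> nat set" where
  "supp z = {j. j < dim_vec z \<and> z $ j \<noteq> 0}"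

definition l1norm :: "int vec \<Rightarrow> int" where
  "l1norm z = (\<Sum>j<dim_vec z. \<bar>z $ j\<bar>)"

definition real_ker :: "int mat \<Rightarrow> real vec set" where
  "real_ker A = {z. dim_vec z = dim_col A \<and> map_mat real_of_int A *\<^sub>v z = 0\<^sub>v (dim_row A)}"

definition int_ker :: "int mat \<Rightarrow> int vec set" where
  "int_ker A = {z. dim_vec z = dim_col A \<and> A *\<^sub>v z = 0\<^sub>v (dim_row A)}"

definition on_line :: "int vec \<Rightarrow> real vec \<Rightarrow> bool" where
  "on_line g z \<longleftrightarrow> dim_vec g = dim_vec z \<and> (\<exists>t::real. \<forall>j<dim_vec z. real_of_int (g $ j) = t * z $ j)"

text \<open>Circuits: for each nonzero kernel vector with inclusion-minimal support, the nonzero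
  integer points on its line that are closest to the origin (all norms on a line are
  proportional; we measure with the l1 norm).\<close>
definition circuits :: "int mat \<Rightarrow> int vec set" where
  "circuits A = {g. \<exists>z \<in> real_ker A. z \<noteq> 0\<^sub>v (dim_col A) \<and>
        (\<forall>y \<in> real_ker A. y \<noteq> 0\<^sub>v (dim_col A) \<longrightarrow> \<not> (supp y \<subset> supp z)) \<and>
        on_line g z \<and> g \<noteq> 0\<^sub>v (dim_col A) \<and>
        (\<forall>h. on_line h z \<longrightarrow> h \<noteq> 0\<^sub>v (dim_col A) \<longrightarrow> l1norm g \<le> l1norm h)}"

definition conformal_le :: "int vec \<Rightarrow> int vec \<Rightarrow> bool" (infix "\<sqsubseteq>" 50) where
  "v \<sqsubseteq> w \<longleftrightarrow> dim_vec v = dim_vec w \<and>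
     (\<forall>i<dim_vec w. v $ i * w $ i \<ge> 0 \<and> \<bar>v $ i\<bar> \<le> \<bar>w $ i\<bar>)"

definition graver :: "int mat \<Rightarrow> int vec set" where
  "graver A = {z. z \<in> int_ker A - {0\<^sub>v (dim_col A)} \<and>
       (\<forall>y \<in> int_ker A - {0\<^sub>v (dim_col A)}. y \<sqsubseteq> z \<longrightarrow> y = z)}"

definition feasible :: "int mat \<Rightarrow> int vec \<Rightarrow> int vec \<Rightarrow> int vec \<Rightarrow> bool" where
  "feasible A b u x \<longleftrightarrow> dim_vec x = dim_col A \<and> A *\<^sub>v x = b \<and>
     (\<forall>i<dim_col A. 0 \<le> x $ i \<and> x $ i \<le> u $ i)"

definition optimal :: "int mat \<Rightarrow> int vec \<Rightarrow> int vec \<Rightarrow> int vec \<Rightarrow> int vec \<Rightarrow> bool" where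
  "optimal A b c u x \<longleftrightarrow> feasible A b u x \<and> (\<forall>y. feasible A b u y \<longrightarrow> c \<bullet> x \<le> c \<bullet> y)"

definition sd_ratio :: "int vec \<Rightarrow> int vec \<Rightarrow> real" where
  "sd_ratio c z = - real_of_int (c \<bullet> z) / real_of_int (l1norm z)"

definition sd_step :: "int mat \<Rightarrow> int vec \<Rightarrow> int vec \<Rightarrow> int vec \<Rightarrow> int vec \<Rightarrow> int vec \<Rightarrow> bool" where
  "sd_step A b c u x x' \<longleftrightarrow> feasible A b u x \<and>
     (\<exists>z \<in> graver A. feasible A b u (x + z) \<and>
        (\<forall>g \<in> graver A. feasible A b u (x + g) \<longrightarrow> sd_ratio c g \<le> sd_ratio c z) \<and>
        sd_ratio c z > 0 \<and>
        (\<exists>\<alpha>::int. feasible A b u (x + of_int \<alpha> \<cdot>\<^sub>v z) \<and>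
           (\<forall>\<beta>::int. feasible A b u (x + of_int \<beta> \<cdot>\<^sub>v z) \<longrightarrow> \<beta> \<le> \<alpha>) \<and>
           x' = x + of_int \<alpha> \<cdot>\<^sub>v z))"

definition sd_stops :: "int mat \<Rightarrow> int vec \<Rightarrow> int vec \<Rightarrow> int vec \<Rightarrow> int vec \<Rightarrow> bool" where
  "sd_stops A b c u x \<longleftrightarrow>
     \<not> (\<exists>z \<in> graver A. feasible A b u (x + z) \<and> sd_ratio c z > 0)"

end

theory Submission
  imports Defs
begin

definition sub :: "'a mat \<Rightarrow> nat list \<Rightarrow> nat list \<Rightarrow> 'a mat" where
  "sub A rs cs = mat (length rs) (length cs) (\<lambda>(i,j). A $$ (rs!i, cs!j))"

definition del :: "nat \<Rightarrow> 'b list \<Rightarrow> 'b list" where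
  "del k xs = take k xs @ drop (Suc k) xs"

lemma sub_carrier[simp]: "sub A rs cs \<in> carrier_mat (length rs) (length cs)"
  by (simp add: sub_def)

lemma sub_dims[simp]: "dim_row (sub A rs cs) = length rs" "dim_col (sub A rs cs) = length cs"
  by (simp_all add: sub_def)

lemma sub_index[simp]: "i < length rs \<Longrightarrow> j < length cs \<Longrightarrow> sub A rs cs $$ (i,j) = A $$ (rs!i, cs!j)"
  by (simp add: sub_def)

lemma length_del[simp]: "k < length xs \<Longrightarrow> length (del k xs) = length xs - 1"
  by (simp add: del_def)

lemma nth_del: "k < length xs \<Longrightarrow> j < length xs - 1 \<Longrightarrow> del k xs ! j = xs ! (if j < k then j else Suc j)"
  by (auto simp: del_def nth_append min_def)

lemma set_del: "set (del k xs) \<subseteq> set xs"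
  unfolding del_def by (auto dest: in_set_takeD in_set_dropD)

lemma distinct_del: "distinct xs \<Longrightarrow> distinct (del k xs)"
  unfolding del_def
  by (simp add: set_take_disj_set_drop_if_distinct)

lemma del_last: "length xs = Suc m \<Longrightarrow> del m xs = take m xs"
  by (simp add: del_def)

lemma mat_delete_sub: assumes "length cs = Suc (length rs)" "k < length cs"
  shows "mat_delete (sub A (rs@[i]) cs) (length rs) k = sub A rs (del k cs)"
  using assms by (intro eq_matI) (auto simp: mat_delete_def nth_append nth_del)

definition cofv :: "'a::comm_ring_1 mat \<Rightarrow> nat list \<Rightarrow> nat list \<Rightarrow> 'a vec" where
  "cofv A rs cs = vec (length cs) (\<lambda>k. (-1)^(length rs + k) * det (sub A rs (del k cs)))"

lemma det_sub_snoc: assumes "length cs = Suc (length rs)"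
  shows "det (sub A (rs@[i]) cs) = (\<Sum>k<length cs. A $$ (i, cs!k) * cofv A rs cs $ k)"
proof -
  have c: "sub A (rs@[i]) cs \<in> carrier_mat (length cs) (length cs)" using sub_carrier[of A "rs@[i]" cs] assms by simp
  have "det (sub A (rs@[i]) cs) = (\<Sum>k<length cs. sub A (rs@[i]) cs $$ (length rs,k) * cofactor (sub A (rs@[i]) cs) (length rs) k)"
    by (rule laplace_expansion_row[OF c]) (use assms in auto)
  also have "\<dots> = (\<Sum>k<length cs. A $$ (i, cs!k) * cofv A rs cs $ k)"
    by (rule sum.cong) (use assms in \<open>auto simp: cofactor_def mat_delete_sub cofv_def\<close>)
  finally show ?thesis .
qed

lemma det_sub_dup: assumes "i \<in> set rs" "length cs = Suc (length rs)"
  shows "det (sub A (rs@[i]) cs) = (0::'a::comm_ring_1)"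
proof -
  obtain q where q: "q < length rs" "rs ! q = i" using assms(1) by (metis in_set_conv_nth)
  show ?thesis
    by (rule det_identical_rows[of _ "length cs" q "length rs"]) 
       (use assms q in \<open>auto intro!: eq_vecI simp: nth_append\<close>)
qed

lemma cofv_last: assumes "length cs = Suc (length rs)"
  shows "cofv A rs cs $ length rs = det (sub A rs (take (length rs) cs))"
  using assms by (simp add: cofv_def del_last)

lemma mult_sub_index: assumes "i < length rs" "v \<in> carrier_vec (length cs)"
  shows "(sub A rs cs *\<^sub>v v) $ i = (\<Sum>k<length cs. A $$ (rs!i, cs!k) * v $ k)"
  using assms by (auto simp: mult_mat_vec_def scalar_prod_def atLeast0LessThan sub_def row_def intro!: sum.cong)

lemma perm_of_list:
  fixes xs :: "nat list"
  assumes dist: "distinct xs"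
  defines "p \<equiv> (\<lambda>i. if i < length xs then card {a\<in>set xs. a < xs!i} else i)"
  shows "p permutes {0..<length xs}" and "\<And>i. i < length xs \<Longrightarrow> pick (set xs) (p i) = xs ! i"
    and "\<And>i. i < length xs \<Longrightarrow> p i < length xs"
proof -
  show pk: "\<And>i. i < length xs \<Longrightarrow> pick (set xs) (p i) = xs ! i"
    unfolding p_def by (simp add: pick_card_in_set)
  show lt: "\<And>i. i < length xs \<Longrightarrow> p i < length xs"
  proof -
    fix i assume i: "i < length xs"
    have m: "xs!i \<in> set xs" using i by simp
    have "{a\<in>set xs. a < xs!i} \<subset> set xs" using m by blast
    hence "card {a\<in>set xs. a < xs!i} < card (set xs)" by (intro psubset_card_mono) simp_all
    moreover have "card (set xs) = length xs" using dist by (rule distinct_card)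
    ultimately show "p i < length xs" using i unfolding p_def by simp
  qed
  have inj: "inj_on p {0..<length xs}"
  proof (rule inj_onI)
    fix i j assume "i \<in> {0..<length xs}" "j \<in> {0..<length xs}" "p i = p j"
    hence "xs ! i = xs ! j" using pk \<open>i \<in> _\<close> \<open>j \<in> _\<close> by (metis atLeastLessThan_iff)
    thus "i = j" using dist \<open>i \<in> _\<close> \<open>j \<in> _\<close> by (simp add: nth_eq_iff_index_eq)
  qed
  have "p ` {0..<length xs} = {0..<length xs}"
    by (rule endo_inj_surj) (use lt inj in auto)
  hence bij: "bij_betw p {0..<length xs} {0..<length xs}" using inj by (simp add: bij_betw_def)
  have st: "\<And>x. x \<notin> {0..<length xs} \<Longrightarrow> p x = x" by (simp add: p_def)
  show "p permutes {0..<length xs}" using bij_imp_permutes[OF bij st] .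
qed


lemma det_perm_rows_cols:
  fixes S :: "'a::comm_ring_1 mat"
  assumes S: "S \<in> carrier_mat t t" and p: "p permutes {0..<t}" and q: "q permutes {0..<t}"
  shows "det (mat t t (\<lambda>(i,j). S $$ (p i, q j))) = signof p * signof q * det S"
proof -
  define M1 where "M1 = mat t t (\<lambda>(i,j). S $$ (i, q j))"
  have M1: "M1 \<in> carrier_mat t t" by (simp add: M1_def)
  have qi: "\<And>j. j < t \<Longrightarrow> q j < t" using p q by (meson atLeastLessThan_iff permutes_in_image zero_le)
  have pi: "\<And>j. j < t \<Longrightarrow> p j < t" using p by (meson atLeastLessThan_iff permutes_in_image zero_le)
  have "mat t t (\<lambda>(i,j). S $$ (p i, q j)) = mat t t (\<lambda>(i,j). M1 $$ (p i, j))"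
    by (rule eq_matI) (auto simp: M1_def pi)
  hence 1: "det (mat t t (\<lambda>(i,j). S $$ (p i, q j))) = signof p * det M1"
    using det_permute_rows[OF M1 p] by simp
  have "det M1 = det (transpose_mat M1)" using det_transpose[OF M1] by simp
  also have "transpose_mat M1 = mat t t (\<lambda>(i,j). (transpose_mat S) $$ (q i, j))"
    by (rule eq_matI) (use S in \<open>auto simp: M1_def qi\<close>)
  also have "det \<dots> = signof q * det (transpose_mat S)"
    by (rule det_permute_rows[OF _ q]) (use S in auto)
  also have "det (transpose_mat S) = det S" using det_transpose[OF S] by simp
  finally show ?thesis using 1 by simp
qed

lemma tu_sub:
  assumes A: "A \<in> carrier_mat d n" and tu: "totally_unimodular A"
    and dr: "distinct rs" and dc: "distinct cs" and sr: "set rs \<subseteq> {..<d}" and sc: "set cs \<subseteq> {..<n}"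
    and len: "length rs = length cs"
  shows "det (sub A rs cs) \<in> {-1,0,1}"
proof -
  let ?I = "set rs" and ?J = "set cs" and ?t = "length rs"
  define p where "p = (\<lambda>i. if i < length rs then card {a\<in>set rs. a < rs!i} else i)"
  define q where "q = (\<lambda>i. if i < length cs then card {a\<in>set cs. a < cs!i} else i)"
  have P: "p permutes {0..<length rs}" "\<And>i. i < length rs \<Longrightarrow> pick (set rs) (p i) = rs ! i"
    "\<And>i. i < length rs \<Longrightarrow> p i < length rs"
    using perm_of_list[OF dr] unfolding p_def by blast+
  have Q: "q permutes {0..<length cs}" "\<And>i. i < length cs \<Longrightarrow> pick (set cs) (q i) = cs ! i"
    "\<And>i. i < length cs \<Longrightarrow> q i < length cs"
    using perm_of_list[OF dc] unfolding q_def by blast+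
  have cI: "{i. i < dim_row A \<and> i \<in> ?I} = ?I" using A sr by auto
  have cJ: "{i. i < dim_col A \<and> i \<in> ?J} = ?J" using A sc by auto
  define S where "S = submatrix A ?I ?J"
  have cdr: "card ?I = ?t" using dr by (rule distinct_card)
  have cdc: "card ?J = ?t" using dc len by (simp add: distinct_card)
  have "dim_row S = ?t" unfolding S_def dim_submatrix cI cdr ..
  moreover have "dim_col S = ?t" unfolding S_def dim_submatrix cJ cdc ..
  ultimately have S: "S \<in> carrier_mat ?t ?t" by (intro carrier_matI)
  have h1: "?I \<subseteq> {..<dim_row A}" "?J \<subseteq> {..<dim_col A}" using sr sc A by auto
  have h2: "card ?I = card ?J" using dr dc len by (simp add: distinct_card)
  have "det S \<in> {-1,0,1}" using tu h1 h2 unfolding totally_unimodular_def S_def by blast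
  have "sub A rs cs = mat ?t ?t (\<lambda>(i,j). S $$ (p i, q j))"
  proof (rule eq_matI)
    fix i j assume i: "i < dim_row (mat ?t ?t (\<lambda>(i,j). S $$ (p i, q j)))"
      and j: "j < dim_col (mat ?t ?t (\<lambda>(i,j). S $$ (p i, q j)))"
    hence i': "i < ?t" and j': "j < length cs" using len by auto
    have "S $$ (p i, q j) = A $$ (pick ?I (p i), pick ?J (q j))"
      unfolding S_def by (rule submatrix_index) (use cI cJ P(3) Q(3) i' j' dr dc in \<open>auto simp: distinct_card\<close>)
    thus "sub A rs cs $$ (i,j) = mat ?t ?t (\<lambda>(i,j). S $$ (p i, q j)) $$ (i,j)"
      using P(2) Q(2) i' j' len by simp
  qed (use len in auto)
  hence "det (sub A rs cs) = signof p * signof q * det S"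
    using det_perm_rows_cols[OF S P(1)] Q(1) len by simp
  moreover have "sign p \<in> {1,-1::int}" "sign q \<in> {1,-1::int}" by (simp_all add: sign_def)
  ultimately show ?thesis using \<open>det S \<in> _\<close> by auto
qed

lemma mult_sub_upt: assumes "i < d" "v \<in> carrier_vec (length cs)"
  shows "(sub A [0..<d] cs *\<^sub>v v) $ i = (\<Sum>k<length cs. A $$ (i, cs!k) * v $ k)"
  using mult_sub_index[of i "[0..<d]" v cs A] assms by simp

lemma exists_rows:
  fixes B :: "'a::field mat"
  shows "distinct cs \<Longrightarrow> set cs \<subseteq> {..<n} \<Longrightarrow>
    (\<forall>v \<in> carrier_vec (length cs). sub B [0..<d] cs *\<^sub>v v = 0\<^sub>v d \<longrightarrow> v = 0\<^sub>v (length cs)) \<Longrightarrow>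
    \<exists>rs. distinct rs \<and> set rs \<subseteq> {..<d} \<and> length rs = length cs \<and> det (sub B rs cs) \<noteq> 0"
proof (induction cs rule: rev_induct)
  case Nil
  have "det (sub B [] []) = 1" by (rule det_dim_zero) (metis sub_carrier list.size(3))
  thus ?case by (intro exI[of _ "[]"]) simp
next
  case (snoc c cs)
  let ?m = "length cs"
  have inj: "\<forall>v \<in> carrier_vec ?m. sub B [0..<d] cs *\<^sub>v v = 0\<^sub>v d \<longrightarrow> v = 0\<^sub>v ?m"
  proof (intro ballI impI)
    fix v :: "'a vec" assume v: "v \<in> carrier_vec ?m" and z: "sub B [0..<d] cs *\<^sub>v v = 0\<^sub>v d"
    define v' where "v' = vec (Suc ?m) (\<lambda>k. if k < ?m then v$k else 0)"
    have v': "v' \<in> carrier_vec (length (cs@[c]))" by (simp add: v'_def)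
    have "sub B [0..<d] (cs@[c]) *\<^sub>v v' = 0\<^sub>v d"
    proof (rule eq_vecI)
      fix i assume "i < dim_vec (0\<^sub>v d :: 'a vec)"
      hence i: "i < d" by simp
      have "(sub B [0..<d] (cs@[c]) *\<^sub>v v') $ i = (\<Sum>k<Suc ?m. B $$ (i, (cs@[c])!k) * v' $ k)"
        using mult_sub_upt[OF i v'] by simp
      also have "\<dots> = (\<Sum>k<?m. B $$ (i, cs!k) * v $ k)"
        by (simp add: v'_def nth_append)
      also have "\<dots> = (sub B [0..<d] cs *\<^sub>v v) $ i" using mult_sub_upt[OF i v] by simp
      finally show "(sub B [0..<d] (cs@[c]) *\<^sub>v v') $ i = 0\<^sub>v d $ i" using z i by simp
    qed simp
    hence "v' = 0\<^sub>v (length (cs@[c]))" using snoc.prems(3) v' by blast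
    thus "v = 0\<^sub>v ?m"
    proof -
      assume h: "v' = 0\<^sub>v (length (cs@[c]))"
      show "v = 0\<^sub>v ?m"
      proof (rule eq_vecI)
        fix k assume "k < dim_vec (0\<^sub>v ?m :: 'a vec)"
        hence k: "k < ?m" by simp
        have "v' $ k = 0" using h k by simp
        thus "v $ k = 0\<^sub>v ?m $ k" using k by (simp add: v'_def)
      qed (use v in simp)
    qed
  qed
  obtain rs where rs: "distinct rs" "set rs \<subseteq> {..<d}" "length rs = ?m" "det (sub B rs cs) \<noteq> 0"
    using snoc.IH[OF _ _ inj] snoc.prems by auto
  have len: "length (cs@[c]) = Suc (length rs)" using rs by simp
  have "\<exists>i<d. det (sub B (rs@[i]) (cs@[c])) \<noteq> 0"
  proof (rule ccontr)
    assume "\<not> ?thesis"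
    hence all0: "\<And>i. i < d \<Longrightarrow> det (sub B (rs@[i]) (cs@[c])) = 0" by auto
    define w where "w = cofv B rs (cs@[c])"
    have w: "w \<in> carrier_vec (length (cs@[c]))" by (simp add: w_def cofv_def)
    have "sub B [0..<d] (cs@[c]) *\<^sub>v w = 0\<^sub>v d"
    proof (rule eq_vecI)
      fix i assume "i < dim_vec (0\<^sub>v d :: 'a vec)"
      hence i: "i < d" by simp
      have "(sub B [0..<d] (cs@[c]) *\<^sub>v w) $ i = det (sub B (rs@[i]) (cs@[c]))"
        using mult_sub_upt[OF i w] det_sub_snoc[OF len, of B i] by (simp add: w_def)
      thus "(sub B [0..<d] (cs@[c]) *\<^sub>v w) $ i = 0\<^sub>v d $ i" using all0[OF i] i by simp
    qed simp
    hence "w = 0\<^sub>v (length (cs@[c]))" using snoc.prems(3) w by blast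
    hence "w $ length rs = 0" using len by simp
    moreover have "w $ length rs = det (sub B rs cs)"
      using cofv_last[OF len, of B] rs(3) by (simp add: w_def)
    ultimately show False using rs(4) by simp
  qed
  then obtain i where i: "i < d" "det (sub B (rs@[i]) (cs@[c])) \<noteq> 0" by blast
  have "i \<notin> set rs" using det_sub_dup[OF _ len, of i B] i(2) by auto
  thus ?case using rs i len by (intro exI[of _ "rs@[i]"]) auto
qed

lemma mv_index: assumes "M \<in> carrier_mat d n" "dim_vec v = n" "i < d"
  shows "(M *\<^sub>v v) $ i = (\<Sum>j<n. M $$ (i,j) * v $ j)"
  using assms by (auto simp: mult_mat_vec_def scalar_prod_def atLeast0LessThan row_def intro!: sum.cong)

lemma sum_reindex_list:
  fixes f :: "nat \<Rightarrow> 'a::comm_monoid_add"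
  assumes "distinct cs" "set cs \<subseteq> {..<n}" "\<And>j. j < n \<Longrightarrow> j \<notin> set cs \<Longrightarrow> f j = 0"
  shows "(\<Sum>j<n. f j) = (\<Sum>k<length cs. f (cs!k))"
proof -
  have "(\<Sum>j<n. f j) = (\<Sum>j\<in>set cs. f j)"
    by (rule sum.mono_neutral_right) (use assms in auto)
  also have "\<dots> = sum_list (map f cs)" using assms(1) by (simp add: sum_list_distinct_conv_sum_set)
  also have "\<dots> = (\<Sum>k<length cs. f (cs!k))" by (simp add: sum_list_sum_nth atLeast0LessThan)
  finally show ?thesis .
qed

definition embed :: "nat \<Rightarrow> nat list \<Rightarrow> 'a::comm_monoid_add vec \<Rightarrow> 'a vec" where
  "embed n cs v = vec n (\<lambda>j. \<Sum>k<length cs. if cs!k = j then v$k else 0)"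

lemma embed_dim[simp]: "dim_vec (embed n cs v) = n" by (simp add: embed_def)

lemma embed_nth: assumes "distinct cs" "set cs \<subseteq> {..<n}" "k < length cs"
  shows "embed n cs v $ (cs!k) = v $ k"
proof -
  have ck: "cs!k < n" using assms by (meson nth_mem subsetD lessThan_iff)
  have "(\<Sum>k'<length cs. if cs!k' = cs!k then v$k' else 0) = (\<Sum>k'<length cs. if k' = k then v$k' else 0)"
    by (rule sum.cong) (use assms in \<open>auto simp: nth_eq_iff_index_eq\<close>)
  thus ?thesis using ck assms(3) by (simp add: embed_def)
qed

lemma embed_out: assumes "j < n" "j \<notin> set cs" shows "embed n cs v $ j = 0"
  using assms by (auto simp: embed_def intro!: sum.neutral)

lemma mult_embed: assumes M: "M \<in> carrier_mat d n" and "distinct cs" "set cs \<subseteq> {..<n}" "i < d"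
  shows "(M *\<^sub>v embed n cs v) $ i = (\<Sum>k<length cs. M $$ (i, cs!k) * v $ k)"
proof -
  have "(M *\<^sub>v embed n cs v) $ i = (\<Sum>j<n. M $$ (i,j) * embed n cs v $ j)"
    by (rule mv_index[OF M]) (use assms in auto)
  also have "\<dots> = (\<Sum>k<length cs. M $$ (i, cs!k) * embed n cs v $ (cs!k))"
    by (rule sum_reindex_list) (use assms in \<open>auto simp: embed_out\<close>)
  also have "\<dots> = (\<Sum>k<length cs. M $$ (i, cs!k) * v $ k)"
    by (rule sum.cong) (use assms in \<open>auto simp: embed_nth\<close>)
  finally show ?thesis .
qed

lemma sub_map: assumes "A \<in> carrier_mat d n" "set X \<subseteq> {..<d}" "set Y \<subseteq> {..<n}"
  shows "sub (map_mat real_of_int A) X Y = map_mat real_of_int (sub A X Y)"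
proof (rule eq_matI)
  fix i j assume "i < dim_row (map_mat real_of_int (sub A X Y))" "j < dim_col (map_mat real_of_int (sub A X Y))"
  hence ij: "i < length X" "j < length Y" by auto
  hence "X!i < d" "Y!j < n" using assms by (meson nth_mem subsetD lessThan_iff)+
  thus "sub (map_mat real_of_int A) X Y $$ (i, j) = map_mat real_of_int (sub A X Y) $$ (i, j)"
    using ij assms(1) by (simp add: sub_def)
qed auto

lemma det_sub_map: assumes "A \<in> carrier_mat d n" "set X \<subseteq> {..<d}" "set Y \<subseteq> {..<n}"
  shows "det (sub (map_mat real_of_int A) X Y) = real_of_int (det (sub A X Y))"
  unfolding sub_map[OF assms] by simp

lemma supp_iff: "j \<in> supp z \<longleftrightarrow> j < dim_vec z \<and> z $ j \<noteq> 0"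
  by (simp add: supp_def)

lemma min_prop:
  assumes A: "A \<in> carrier_mat d n"
    and z: "z \<in> real_ker A"
    and mini: "\<forall>y \<in> real_ker A. y \<noteq> 0\<^sub>v (dim_col A) \<longrightarrow> \<not> (supp y \<subset> supp z)"
    and y: "y \<in> real_ker A" "y \<noteq> 0\<^sub>v n" and sy: "supp y \<subseteq> supp z"
  shows "\<exists>t. t \<noteq> 0 \<and> y = t \<cdot>\<^sub>v z"
proof -
  let ?B = "map_mat real_of_int A"
  have B: "?B \<in> carrier_mat d n" using A by simp
  have dz: "dim_vec z = n" and Bz: "?B *\<^sub>v z = 0\<^sub>v d" using z A by (auto simp: real_ker_def)
  have dy: "dim_vec y = n" and By: "?B *\<^sub>v y = 0\<^sub>v d" using y A by (auto simp: real_ker_def)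
  have eqs: "supp y = supp z" using mini y sy A by auto
  obtain k where k: "k < n" "y $ k \<noteq> 0" using y(2) dy by (metis eq_vecI index_zero_vec(1) index_zero_vec(2))
  have zk: "z $ k \<noteq> 0" using k eqs dy dz by (auto simp: supp_def)
  define t where "t = y $ k / z $ k"
  define v where "v = y - t \<cdot>\<^sub>v z"
  have dv: "dim_vec v = n" using dy dz by (simp add: v_def)
  have "?B *\<^sub>v v = 0\<^sub>v d"
  proof (rule eq_vecI)
    fix i assume "i < dim_vec (0\<^sub>v d :: real vec)" hence i: "i < d" by simp
    have "(?B *\<^sub>v v) $ i = (\<Sum>j<n. ?B $$ (i,j) * v $ j)" by (rule mv_index[OF B dv i])
    also have "\<dots> = (\<Sum>j<n. ?B $$ (i,j) * y $ j) - t * (\<Sum>j<n. ?B $$ (i,j) * z $ j)"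
      by (simp add: v_def dy dz sum_subtractf sum_distrib_left algebra_simps)
    also have "\<dots> = (?B *\<^sub>v y) $ i - t * (?B *\<^sub>v z) $ i"
      using mv_index[OF B dy i] mv_index[OF B dz i] by simp
    finally show "(?B *\<^sub>v v) $ i = 0\<^sub>v d $ i" using By Bz i by simp
  qed (use A in simp)
  hence vk: "v \<in> real_ker A" using dv A by (simp add: real_ker_def)
  have "supp v \<subset> supp z"
  proof -
    have "supp v \<subseteq> supp z"
    proof
      fix j assume "j \<in> supp v"
      hence j: "j < n" "v $ j \<noteq> 0" using dv by (auto simp: supp_def)
      show "j \<in> supp z"
      proof (rule ccontr)
        assume "j \<notin> supp z"
        hence "z $ j = 0" "y $ j = 0" using j eqs dz dy by (auto simp: supp_def)
        thus False using j dy dz by (simp add: v_def)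
      qed
    qed
    moreover have "k \<notin> supp v" using k zk dy dz by (simp add: supp_def v_def t_def)
    moreover have "k \<in> supp z" using k zk dz by (simp add: supp_def)
    ultimately show ?thesis by blast
  qed
  hence "v = 0\<^sub>v n" using mini vk A by auto
  have "y = t \<cdot>\<^sub>v z"
  proof (rule eq_vecI)
    fix i assume "i < dim_vec (t \<cdot>\<^sub>v z)" hence i: "i < n" using dz by simp
    have "v $ i = 0" using \<open>v = 0\<^sub>v n\<close> i by simp
    thus "y $ i = (t \<cdot>\<^sub>v z) $ i" using i dy dz by (simp add: v_def)
  qed (use dy dz in simp)
  moreover have "t \<noteq> 0" using k zk by (simp add: t_def)
  ultimately show ?thesis by blast
qed

lemma pm1_mult: "x \<in> {-1,0,1::int} \<Longrightarrow> (-1)^p * x \<in> {-1,0,1}"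
  by (cases "even p") auto

lemma circuit_pm1:
  assumes A: "A \<in> carrier_mat d n" and tu: "totally_unimodular A"
    and z: "z \<in> real_ker A" "z \<noteq> 0\<^sub>v n"
    and mini: "\<forall>y \<in> real_ker A. y \<noteq> 0\<^sub>v (dim_col A) \<longrightarrow> \<not> (supp y \<subset> supp z)"
  shows "\<exists>h t. h \<in> int_ker A \<and> (\<forall>j<n. h$j \<in> {-1,0,1}) \<and> h \<noteq> 0\<^sub>v n \<and> t \<noteq> 0
     \<and> map_vec real_of_int h = t \<cdot>\<^sub>v z"
proof -
  let ?B = "map_mat real_of_int A"
  have B: "?B \<in> carrier_mat d n" using A by simp
  have dz: "dim_vec z = n" and Bz: "?B *\<^sub>v z = 0\<^sub>v d" using z A by (auto simp: real_ker_def)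
  define cs where "cs = sorted_list_of_set (supp z)"
  have fin: "finite (supp z)" by (simp add: supp_def)
  have dcs: "distinct cs" and scs: "set cs = supp z" using fin by (simp_all add: cs_def)
  have scn: "set cs \<subseteq> {..<n}" using scs dz by (auto simp: supp_def)
  obtain k0 where k0: "k0 < n" "z $ k0 \<noteq> 0" using z(2) dz by (metis eq_vecI index_zero_vec(1) index_zero_vec(2))
  have "k0 \<in> set cs" using k0 scs dz by (simp add: supp_def)
  hence "cs \<noteq> []" by auto
  then obtain cs' c where csd: "cs = cs' @ [c]" by (metis rev_exhaust)
  let ?m = "length cs'"
  have dcs': "distinct cs'" "c \<notin> set cs'" using dcs csd by auto
  have scs': "set cs' \<subseteq> {..<n}" using scn csd by auto
  have inj: "\<forall>v \<in> carrier_vec ?m. sub ?B [0..<d] cs' *\<^sub>v v = 0\<^sub>v d \<longrightarrow> v = 0\<^sub>v ?m"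
  proof (intro ballI impI, rule ccontr)
    fix v :: "real vec" assume v: "v \<in> carrier_vec ?m" and e: "sub ?B [0..<d] cs' *\<^sub>v v = 0\<^sub>v d"
      and nz: "v \<noteq> 0\<^sub>v ?m"
    define y where "y = embed n cs' v"
    have "?B *\<^sub>v y = 0\<^sub>v d"
    proof (rule eq_vecI)
      fix i assume "i < dim_vec (0\<^sub>v d :: real vec)" hence i: "i<d" by simp
      have "(?B *\<^sub>v y) $ i = (\<Sum>k<?m. ?B $$ (i, cs'!k) * v $ k)"
        unfolding y_def by (rule mult_embed[OF B dcs'(1) scs' i])
      also have "\<dots> = (sub ?B [0..<d] cs' *\<^sub>v v) $ i" using mult_sub_upt[OF i v] by simp
      finally show "(?B *\<^sub>v y) $ i = 0\<^sub>v d $ i" using e i by simp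
    qed (use A in simp)
    hence yk: "y \<in> real_ker A" using A by (simp add: real_ker_def y_def)
    obtain k where k: "k < ?m" "v $ k \<noteq> 0" using nz v by (metis eq_vecI carrier_vecD index_zero_vec(1) index_zero_vec(2))
    have yck: "y $ (cs'!k) \<noteq> 0" using embed_nth[OF dcs'(1) scs' k(1), of v] k(2) by (simp add: y_def)
    have ckn: "cs'!k < n" using scs' k(1) by (meson nth_mem subsetD lessThan_iff)
    have ynz: "y \<noteq> 0\<^sub>v n" using yck ckn by auto
    have "supp y \<subseteq> set cs'"
      using embed_out[of _ n cs' v] by (auto simp: supp_def y_def)
    moreover have "set cs' \<subset> supp z" using csd scs dcs'(2) by auto
    ultimately have "supp y \<subset> supp z" by blast
    thus False using mini yk ynz A by auto
  qed
  obtain rs where rs: "distinct rs" "set rs \<subseteq> {..<d}" "length rs = ?m" "det (sub ?B rs cs') \<noteq> 0"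
    using exists_rows[OF dcs'(1) scs' inj] by blast
  have len: "length cs = Suc (length rs)" using csd rs(3) by simp
  define w where "w = cofv A rs cs"
  define h where "h = embed n cs w"
  have dh: "dim_vec h = n" by (simp add: h_def)
  have zero_i: "det (sub A (rs@[i]) cs) = 0" if i: "i < d" for i
  proof -
    define zc where "zc = vec (length cs) (\<lambda>k. z $ (cs!k))"
    have sq: "sub ?B (rs@[i]) cs \<in> carrier_mat (length cs) (length cs)"
      using sub_carrier[of ?B "rs@[i]" cs] len by simp
    have zc1: "zc \<in> carrier_vec (length cs)" by (simp add: zc_def)
    have "cs!0 \<in> supp z" using scs \<open>cs \<noteq> []\<close> by (metis length_greater_0_conv nth_mem)
    hence "zc $ 0 \<noteq> 0" using \<open>cs \<noteq> []\<close> by (simp add: zc_def supp_def)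
    hence zc2: "zc \<noteq> 0\<^sub>v (length cs)" using \<open>cs \<noteq> []\<close> by auto
    have "sub ?B (rs@[i]) cs *\<^sub>v zc = 0\<^sub>v (length cs)"
    proof (rule eq_vecI)
      fix r assume "r < dim_vec (0\<^sub>v (length cs) :: real vec)" hence r: "r < length cs" by simp
      define row where "row = (rs@[i])!r"
      have row: "row < d"
      proof (cases "r < length rs")
        case True thus ?thesis using rs(2) by (simp add: row_def nth_append) (meson nth_mem subsetD lessThan_iff)
      next
        case False thus ?thesis using r len i by (simp add: row_def nth_append)
      qed
      have "(sub ?B (rs@[i]) cs *\<^sub>v zc) $ r = (\<Sum>k<length cs. ?B $$ (row, cs!k) * zc $ k)"
        using mult_sub_index[of r "rs@[i]" zc cs ?B] r len zc1 by (simp add: row_def)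
      also have "\<dots> = (\<Sum>k<length cs. ?B $$ (row, cs!k) * z $ (cs!k))"
        by (simp add: zc_def)
      also have "\<dots> = (\<Sum>j<n. ?B $$ (row, j) * z $ j)"
        by (rule sum_reindex_list[OF dcs scn, symmetric]) (use scs dz in \<open>auto simp: supp_def\<close>)
      also have "\<dots> = (?B *\<^sub>v z) $ row" using mv_index[OF B dz row] by simp
      finally show "(sub ?B (rs@[i]) cs *\<^sub>v zc) $ r = 0\<^sub>v (length cs) $ r" using Bz row r by simp
    qed (use len in simp)
    hence "det (sub ?B (rs@[i]) cs) = 0" using det_0_iff_vec_prod_zero_field[OF sq] zc1 zc2 by blast
    moreover have "set (rs@[i]) \<subseteq> {..<d}" using rs(2) i by auto
    ultimately show "det (sub A (rs@[i]) cs) = 0" using det_sub_map[OF A _ scn] by simp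
  qed
  have hk: "h \<in> int_ker A"
  proof -
    have "A *\<^sub>v h = 0\<^sub>v d"
    proof (rule eq_vecI)
      fix i assume "i < dim_vec (0\<^sub>v d :: int vec)" hence i: "i<d" by simp
      have "(A *\<^sub>v h) $ i = (\<Sum>k<length cs. A $$ (i, cs!k) * w $ k)"
        unfolding h_def by (rule mult_embed[OF A dcs scn i])
      also have "\<dots> = det (sub A (rs@[i]) cs)" using det_sub_snoc[OF len, of A i] by (simp add: w_def)
      finally show "(A *\<^sub>v h) $ i = 0\<^sub>v d $ i" using zero_i[OF i] i by simp
    qed (use A in simp)
    thus ?thesis using A dh by (simp add: int_ker_def)
  qed
  have hent: "\<forall>j<n. h$j \<in> {-1,0,1}"
  proof (intro allI impI)
    fix j assume j: "j < n"
    show "h$j \<in> {-1,0,1}"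
    proof (cases "j \<in> set cs")
      case True
      then obtain k where k: "k < length cs" "j = cs!k" by (metis in_set_conv_nth)
      have "h $ j = w $ k" using embed_nth[OF dcs scn k(1), of w] k by (simp add: h_def)
      also have "\<dots> = (-1)^(length rs + k) * det (sub A rs (del k cs))" using k by (simp add: w_def cofv_def)
      also have "\<dots> \<in> {-1,0,1}"
      proof (rule pm1_mult, rule tu_sub[OF A tu rs(1) distinct_del[OF dcs] rs(2)])
        show "set (del k cs) \<subseteq> {..<n}" using set_del[of k cs] scn by blast
        show "length rs = length (del k cs)" using k len by simp
      qed
      finally show ?thesis .
    next
      case False thus ?thesis using embed_out[OF j False, of w] by (simp add: h_def)
    qed
  qed
  have "h $ (cs!?m) = w $ ?m" using embed_nth[OF dcs scn, of ?m w] csd by (simp add: h_def)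
  also have "\<dots> = det (sub A rs cs')" using cofv_last[OF len, of A] rs(3) csd by (simp add: w_def)
  finally have hm: "h $ (cs!?m) = det (sub A rs cs')" .
  have "det (sub A rs cs') \<noteq> 0" using rs(4) det_sub_map[OF A rs(2) scs'] by simp
  moreover have cmn: "cs!?m < n" using scn csd by simp
  ultimately have hnz: "h \<noteq> 0\<^sub>v n"
  proof (intro notI)
    assume "det (sub A rs cs') \<noteq> 0" "cs!?m < n" "h = 0\<^sub>v n"
    hence "h $ (cs!?m) = 0" by simp
    thus False using hm \<open>det (sub A rs cs') \<noteq> 0\<close> by simp
  qed
  let ?hr = "map_vec real_of_int h"
  have "?B *\<^sub>v ?hr = 0\<^sub>v d"
  proof (rule eq_vecI)
    fix i assume "i < dim_vec (0\<^sub>v d :: real vec)" hence i: "i<d" by simp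
    have "(?B *\<^sub>v ?hr) $ i = (\<Sum>j<n. ?B $$ (i,j) * ?hr $ j)" by (rule mv_index[OF B _ i]) (simp add: dh)
    also have "\<dots> = (\<Sum>j<n. real_of_int (A $$ (i,j) * h $ j))"
      by (rule sum.cong) (use A i dh in simp_all)
    also have "\<dots> = real_of_int (\<Sum>j<n. A $$ (i,j) * h $ j)" by simp
    also have "(\<Sum>j<n. A $$ (i,j) * h $ j) = (A *\<^sub>v h) $ i" using mv_index[OF A dh i] by simp
    also have "\<dots> = 0" using hk A i by (simp add: int_ker_def)
    finally show "(?B *\<^sub>v ?hr) $ i = 0\<^sub>v d $ i" using i by simp
  qed (use A in simp)
  hence hrk: "?hr \<in> real_ker A" using A dh by (simp add: real_ker_def)
  have hrnz: "?hr \<noteq> 0\<^sub>v n"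
  proof
    assume "?hr = 0\<^sub>v n"
    hence "?hr $ (cs!?m) = 0" using cmn by simp
    thus False using hm \<open>det (sub A rs cs') \<noteq> 0\<close> cmn dh by simp
  qed
  have "supp ?hr \<subseteq> supp z"
  proof
    fix j assume "j \<in> supp ?hr"
    hence j: "j < n" "h $ j \<noteq> 0" using dh by (auto simp: supp_def)
    hence "j \<in> set cs" using embed_out[of j n cs w] by (auto simp: h_def)
    thus "j \<in> supp z" using scs by simp
  qed
  then obtain t where "t \<noteq> 0" "?hr = t \<cdot>\<^sub>v z" using min_prop[OF A z(1) mini hrk hrnz] by blast
  thus ?thesis using hk hent hnz by blast
qed

lemma ker_lin: assumes A: "A \<in> carrier_mat d n" and x: "x \<in> real_ker A" and y: "y \<in> real_ker A"
  shows "a \<cdot>\<^sub>v x + b \<cdot>\<^sub>v y \<in> real_ker A"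
proof -
  let ?B = "map_mat real_of_int A"
  have B: "?B \<in> carrier_mat d n" using A by simp
  have dx: "dim_vec x = n" and Bx: "?B *\<^sub>v x = 0\<^sub>v d" using x A by (auto simp: real_ker_def)
  have dy: "dim_vec y = n" and By: "?B *\<^sub>v y = 0\<^sub>v d" using y A by (auto simp: real_ker_def)
  let ?v = "a \<cdot>\<^sub>v x + b \<cdot>\<^sub>v y"
  have dv: "dim_vec ?v = n" using dx dy by simp
  have "?B *\<^sub>v ?v = 0\<^sub>v d"
  proof (rule eq_vecI)
    fix i assume "i < dim_vec (0\<^sub>v d :: real vec)" hence i: "i < d" by simp
    have "(?B *\<^sub>v ?v) $ i = (\<Sum>j<n. ?B $$ (i,j) * ?v $ j)" by (rule mv_index[OF B dv i])
    also have "\<dots> = (\<Sum>j<n. a * (?B $$ (i,j) * x $ j) + b * (?B $$ (i,j) * y $ j))"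
      by (rule sum.cong) (use dx dy in \<open>simp_all add: algebra_simps\<close>)
    also have "\<dots> = a * (\<Sum>j<n. ?B $$ (i,j) * x $ j) + b * (\<Sum>j<n. ?B $$ (i,j) * y $ j)"
      by (simp add: sum.distrib sum_distrib_left)
    also have "\<dots> = a * (?B *\<^sub>v x) $ i + b * (?B *\<^sub>v y) $ i"
      using mv_index[OF B dx i] mv_index[OF B dy i] by simp
    finally show "(?B *\<^sub>v ?v) $ i = 0\<^sub>v d $ i" using Bx By i by simp
  qed (use A in simp)
  thus ?thesis using dv A by (simp add: real_ker_def)
qed

lemma sign_trans: "b \<noteq> 0 \<Longrightarrow> a*b \<ge> 0 \<Longrightarrow> b*c \<ge> 0 \<Longrightarrow> a*c \<ge> (0::real)"
  by (auto simp: zero_le_mult_iff)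

lemma conf_circuit:
  assumes A: "A \<in> carrier_mat d n"
  shows "w \<in> real_ker A \<Longrightarrow> w \<noteq> 0\<^sub>v n \<Longrightarrow> \<exists>z \<in> real_ker A. z \<noteq> 0\<^sub>v n \<and>
     (\<forall>y \<in> real_ker A. y \<noteq> 0\<^sub>v (dim_col A) \<longrightarrow> \<not> (supp y \<subset> supp z)) \<and>
     supp z \<subseteq> supp w \<and> (\<forall>j<n. z$j * w$j \<ge> 0)"
proof (induction "card (supp w)" arbitrary: w rule: less_induct)
  case less
  have dcA: "dim_col A = n" using A by simp
  have dw: "dim_vec w = n" using less.prems A by (simp add: real_ker_def)
  show ?case
  proof (cases "\<forall>y \<in> real_ker A. y \<noteq> 0\<^sub>v (dim_col A) \<longrightarrow> \<not> (supp y \<subset> supp w)")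
    case True
    thus ?thesis using less.prems by (intro bexI[of _ w]) auto
  next
    case False
    then obtain y where y: "y \<in> real_ker A" "y \<noteq> 0\<^sub>v n" "supp y \<subset> supp w" using dcA by auto
    have dy: "dim_vec y = n" using y A by (simp add: real_ker_def)
    obtain j1 where j1: "j1 < n" "y $ j1 \<noteq> 0" using y(2) dy by (metis eq_vecI index_zero_vec(1) index_zero_vec(2))
    have "j1 \<in> supp w" using y(3) j1 dy by (auto simp: supp_def)
    hence wj1: "w $ j1 \<noteq> 0" by (simp add: supp_def)
    define sg :: real where "sg = (if y $ j1 * w $ j1 > 0 then 1 else -1)"
    define y' where "y' = sg \<cdot>\<^sub>v y"
    have sg0: "sg \<noteq> 0" by (simp add: sg_def)
    have "sg \<cdot>\<^sub>v y + 0 \<cdot>\<^sub>v y = y'" by (intro eq_vecI) (auto simp: y'_def)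
    hence y'k: "y' \<in> real_ker A" using ker_lin[OF A y(1) y(1), of sg 0] by simp
    have dy': "dim_vec y' = n" using dy by (simp add: y'_def)
    have sy': "supp y' = supp y" using sg0 dy by (auto simp: supp_def y'_def)
    have pj1: "y' $ j1 * w $ j1 > 0" using j1 wj1 dy
      by (auto simp: y'_def sg_def mult_less_0_iff zero_less_mult_iff)
    define P where "P = {j. j < n \<and> y' $ j * w $ j > 0}"
    have Pfin: "finite P" by (simp add: P_def)
    have Pne: "P \<noteq> {}" using pj1 j1 by (auto simp: P_def)
    define lam where "lam = Min ((\<lambda>j. w $ j / y' $ j) ` P)"
    have "lam \<in> (\<lambda>j. w $ j / y' $ j) ` P" unfolding lam_def
      by (rule Min_in) (use Pfin Pne in auto)
    then obtain j0 where j0: "j0 \<in> P" "lam = w $ j0 / y' $ j0" by blast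
    have lam_le: "\<And>j. j \<in> P \<Longrightarrow> lam \<le> w $ j / y' $ j" using Pfin by (auto simp: lam_def)
    have pos: "\<And>j. j \<in> P \<Longrightarrow> w $ j / y' $ j > 0"
      by (auto simp: P_def zero_less_mult_iff zero_less_divide_iff)
    have lam0: "lam > 0" using pos[OF j0(1)] j0(2) by simp
    define w' where "w' = 1 \<cdot>\<^sub>v w + (- lam) \<cdot>\<^sub>v y'"
    have w'k: "w' \<in> real_ker A" unfolding w'_def by (rule ker_lin[OF A less.prems(1) y'k])
    have dw': "dim_vec w' = n" using dw dy' by (simp add: w'_def)
    have w'j: "\<And>j. j < n \<Longrightarrow> w' $ j = w $ j - lam * y' $ j" using dw dy' by (simp add: w'_def)
    have sub1: "supp w' \<subseteq> supp w"
    proof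
      fix j assume "j \<in> supp w'"
      hence j: "j < n" "w' $ j \<noteq> 0" using dw' by (auto simp: supp_def)
      show "j \<in> supp w"
      proof (rule ccontr)
        assume "j \<notin> supp w"
        hence "w $ j = 0" "j \<notin> supp y'" using j dw sy' y(3) by (auto simp: supp_def)
        hence "w $ j = 0" "y' $ j = 0" using j dy' by (auto simp: supp_def)
        thus False using j w'j by simp
      qed
    qed
    have j0n: "j0 < n" "y' $ j0 * w $ j0 > 0" using j0(1) by (auto simp: P_def)
    hence y'j0: "y' $ j0 \<noteq> 0" by auto
    have "w' $ j0 = 0" using w'j[OF j0n(1)] j0(2) y'j0 by simp
    hence "j0 \<notin> supp w'" by (simp add: supp_def)
    moreover have "j0 \<in> supp w" using j0n dw by (auto simp: supp_def)
    ultimately have psub: "supp w' \<subset> supp w" using sub1 by blast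
    hence lt: "card (supp w') < card (supp w)" by (intro psubset_card_mono) (simp_all add: supp_def)
    have w'nz: "w' \<noteq> 0\<^sub>v n"
    proof
      assume w'0: "w' = 0\<^sub>v n"
      have "supp w \<subseteq> supp y'"
      proof
        fix j assume "j \<in> supp w"
        hence j: "j < n" "w $ j \<noteq> 0" using dw by (auto simp: supp_def)
        have "w' $ j = 0" using w'0 j by simp
        hence "w $ j = lam * y' $ j" using w'j[OF j(1)] by simp
        thus "j \<in> supp y'" using j dy' by (auto simp: supp_def)
      qed
      thus False using sy' y(3) by blast
    qed
    have sgn: "\<forall>j<n. w' $ j * w $ j \<ge> 0"
    proof (intro allI impI)
      fix j assume j: "j < n"
      show "w' $ j * w $ j \<ge> 0"
      proof (cases "y' $ j * w $ j > 0")
        case True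
        hence jP: "j \<in> P" using j by (simp add: P_def)
        have yj: "y' $ j \<noteq> 0" using True by auto
        have "lam * (y' $ j * w $ j) \<le> (w $ j / y' $ j) * (y' $ j * w $ j)"
          by (rule mult_right_mono[OF lam_le[OF jP]]) (use True in simp)
        also have "\<dots> = w $ j * w $ j" using yj by (simp add: field_simps)
        finally have "lam * (y' $ j * w $ j) \<le> w $ j * w $ j" .
        moreover have "w' $ j * w $ j = w $ j * w $ j - lam * (y' $ j * w $ j)"
          by (subst w'j[OF j]) (simp add: algebra_simps)
        ultimately show ?thesis by linarith
      next
        case False
        hence "lam * (y' $ j * w $ j) \<le> 0" using lam0 by (simp add: mult_nonneg_nonpos)
        moreover have "w $ j * w $ j \<ge> 0" by simp
        moreover have "w' $ j * w $ j = w $ j * w $ j - lam * (y' $ j * w $ j)"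
          by (subst w'j[OF j]) (simp add: algebra_simps)
        ultimately show ?thesis by linarith
      qed
    qed
    obtain z where z: "z \<in> real_ker A" "z \<noteq> 0\<^sub>v n"
      "\<forall>y \<in> real_ker A. y \<noteq> 0\<^sub>v (dim_col A) \<longrightarrow> \<not> (supp y \<subset> supp z)"
      "supp z \<subseteq> supp w'" "\<forall>j<n. z$j * w'$j \<ge> 0"
      using less.hyps[OF lt w'k w'nz] by blast
    have dz: "dim_vec z = n" using z(1) A by (simp add: real_ker_def)
    have "\<forall>j<n. z$j * w$j \<ge> 0"
    proof (intro allI impI)
      fix j assume j: "j < n"
      show "z$j * w$j \<ge> 0"
      proof (cases "z $ j = 0")
        case False
        hence "j \<in> supp w'" using z(4) j dz by (auto simp: supp_def)
        hence "w' $ j \<noteq> 0" by (simp add: supp_def)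
        thus ?thesis using sign_trans[of "w' $ j" "z $ j" "w $ j"] z(5) sgn j by simp
      qed simp
    qed
    thus ?thesis using z sub1 by blast
  qed
qed

lemma int_ker_real: assumes A: "A \<in> carrier_mat d n" and g: "g \<in> int_ker A"
  shows "map_vec real_of_int g \<in> real_ker A"
proof -
  let ?B = "map_mat real_of_int A" and ?gr = "map_vec real_of_int g"
  have B: "?B \<in> carrier_mat d n" using A by simp
  have dg: "dim_vec g = n" and Ag: "A *\<^sub>v g = 0\<^sub>v d" using g A by (auto simp: int_ker_def)
  have "?B *\<^sub>v ?gr = 0\<^sub>v d"
  proof (rule eq_vecI)
    fix i assume "i < dim_vec (0\<^sub>v d :: real vec)" hence i: "i<d" by simp
    have "(?B *\<^sub>v ?gr) $ i = (\<Sum>j<n. ?B $$ (i,j) * ?gr $ j)" by (rule mv_index[OF B _ i]) (simp add: dg)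
    also have "\<dots> = (\<Sum>j<n. real_of_int (A $$ (i,j) * g $ j))"
      by (rule sum.cong) (use A i dg in simp_all)
    also have "\<dots> = real_of_int (\<Sum>j<n. A $$ (i,j) * g $ j)" by simp
    also have "(\<Sum>j<n. A $$ (i,j) * g $ j) = (A *\<^sub>v g) $ i" using mv_index[OF A dg i] by simp
    also have "\<dots> = 0" using Ag i by simp
    finally show "(?B *\<^sub>v ?gr) $ i = 0\<^sub>v d $ i" using i by simp
  qed (use A in simp)
  thus ?thesis using A dg by (simp add: real_ker_def)
qed

lemma int_ker_smult: assumes A: "A \<in> carrier_mat d n" and g: "g \<in> int_ker A"
  shows "(s::int) \<cdot>\<^sub>v g \<in> int_ker A"
proof -
  have dg: "dim_vec g = n" and Ag: "A *\<^sub>v g = 0\<^sub>v d" using g A by (auto simp: int_ker_def)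
  have "A *\<^sub>v (s \<cdot>\<^sub>v g) = 0\<^sub>v d"
  proof (rule eq_vecI)
    fix i assume "i < dim_vec (0\<^sub>v d :: int vec)" hence i: "i<d" by simp
    have "(A *\<^sub>v (s \<cdot>\<^sub>v g)) $ i = (\<Sum>j<n. A $$ (i,j) * (s \<cdot>\<^sub>v g) $ j)" by (rule mv_index[OF A _ i]) (simp add: dg)
    also have "\<dots> = s * (\<Sum>j<n. A $$ (i,j) * g $ j)"
      by (simp add: sum_distrib_left dg algebra_simps)
    also have "(\<Sum>j<n. A $$ (i,j) * g $ j) = (A *\<^sub>v g) $ i" using mv_index[OF A dg i] by simp
    finally show "(A *\<^sub>v (s \<cdot>\<^sub>v g)) $ i = 0\<^sub>v d $ i" using i Ag by simp
  qed (use A in simp)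
  thus ?thesis using A dg by (simp add: int_ker_def)
qed

lemma line_mult:
  assumes g: "\<forall>j<n. g$j \<in> {-1,0,1::int}" "g \<noteq> 0\<^sub>v n" "dim_vec g = n"
    and gt: "\<forall>j<n. real_of_int (g$j) = t * z$j"
    and h: "\<forall>j<n. real_of_int (h$j) = s * z$j"
  shows "\<exists>lam::int. \<forall>j<n. h$j = lam * g$j"
proof -
  obtain j0 where j0: "j0 < n" "g $ j0 \<noteq> 0" using g(2,3) by (metis eq_vecI index_zero_vec(1) index_zero_vec(2))
  have g2: "g $ j0 * g $ j0 = 1" using g(1) j0 by auto
  have t0: "t \<noteq> 0" using gt j0 by auto
  define lam where "lam = h $ j0 * g $ j0"
  have "real_of_int lam = s / t"
  proof -
    have "real_of_int lam = s * z $ j0 * (t * z $ j0)" using h gt j0 by (simp add: lam_def)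
    also have "\<dots> = s / t * ((t * z $ j0) * (t * z $ j0))" using t0 by (simp add: field_simps)
    also have "(t * z $ j0) * (t * z $ j0) = 1" using gt j0 g2
      by (metis of_int_1 of_int_mult)
    finally show ?thesis by simp
  qed
  have "\<forall>j<n. h$j = lam * g$j"
  proof (intro allI impI)
    fix j assume j: "j < n"
    have "real_of_int (h $ j) = s / t * (t * z $ j)" using h j t0 by simp
    also have "\<dots> = real_of_int (lam * g $ j)" using gt j \<open>real_of_int lam = s / t\<close> by simp
    finally show "h$j = lam * g$j" by linarith
  qed
  thus ?thesis by blast
qed

lemma l1_mult: assumes "dim_vec h = n" "dim_vec g = n" "\<forall>j<n. h$j = lam * g$j"
  shows "l1norm h = \<bar>lam\<bar> * l1norm g"
  using assms by (simp add: l1norm_def sum_distrib_left abs_mult)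

lemma l1_pos: assumes "dim_vec g = n" "g \<noteq> 0\<^sub>v n" shows "l1norm g > 0"
proof -
  obtain j0 where j0: "j0 < n" "g $ j0 \<noteq> 0" using assms by (metis eq_vecI index_zero_vec(1) index_zero_vec(2))
  have "l1norm g = (\<Sum>j<n. \<bar>g$j\<bar>)" using assms by (simp add: l1norm_def)
  also have "\<dots> > 0" by (rule sum_pos2[of _ j0]) (use j0 in auto)
  finally show ?thesis .
qed

lemma l1_nonneg: "l1norm g \<ge> 0" by (simp add: l1norm_def sum_nonneg)

lemma circuits_pm1:
  assumes A: "A \<in> carrier_mat d n" and tu: "totally_unimodular A" and g: "g \<in> circuits A"
  shows "dim_vec g = n \<and> (\<forall>j<n. g$j \<in> {-1,0,1})"
proof -
  have dcA: "dim_col A = n" using A by simp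
  obtain z where z: "z \<in> real_ker A" "z \<noteq> 0\<^sub>v n"
      "\<forall>y \<in> real_ker A. y \<noteq> 0\<^sub>v (dim_col A) \<longrightarrow> \<not> (supp y \<subset> supp z)"
      "on_line g z" "g \<noteq> 0\<^sub>v n" "\<forall>h. on_line h z \<longrightarrow> h \<noteq> 0\<^sub>v n \<longrightarrow> l1norm g \<le> l1norm h"
    using g dcA unfolding circuits_def by auto
  have dz: "dim_vec z = n" using z(1) A by (simp add: real_ker_def)
  obtain h t where h: "h \<in> int_ker A" "\<forall>j<n. h$j \<in> {-1,0,1}" "h \<noteq> 0\<^sub>v n" "t \<noteq> 0"
     "map_vec real_of_int h = t \<cdot>\<^sub>v z"
    using circuit_pm1[OF A tu z(1,2) z(3)] by blast
  have dh: "dim_vec h = n" using h(1) A by (simp add: int_ker_def)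
  have ht: "\<forall>j<n. real_of_int (h$j) = t * z$j"
  proof (intro allI impI)
    fix j assume j: "j < n"
    have "map_vec real_of_int h $ j = (t \<cdot>\<^sub>v z) $ j" using h(5) by simp
    thus "real_of_int (h$j) = t * z$j" using j dh dz by simp
  qed
  have onh: "on_line h z" using ht dh dz by (auto simp: on_line_def)
  have dg: "dim_vec g = n" using z(4) dz by (simp add: on_line_def)
  obtain s where gs: "\<forall>j<n. real_of_int (g$j) = s * z$j" using z(4) dz by (auto simp: on_line_def)
  obtain lam where lam: "\<forall>j<n. g$j = lam * h$j" using line_mult[OF h(2,3) dh ht gs] by blast
  have "l1norm g = \<bar>lam\<bar> * l1norm h" by (rule l1_mult[OF dg dh lam])
  moreover have "l1norm g \<le> l1norm h" using z(6) onh h(3) by blast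
  moreover have "l1norm h > 0" by (rule l1_pos[OF dh h(3)])
  ultimately have "\<bar>lam\<bar> \<le> 1" by (metis mult_le_cancel_right2 not_less)
  hence "lam \<in> {-1,0,1}" by auto
  hence "\<forall>j<n. g$j \<in> {-1,0,1}" using lam h(2) by auto
  thus ?thesis using dg by simp
qed

lemma finite_pm1: "finite {v :: int vec. dim_vec v = n \<and> (\<forall>j<n. v$j \<in> {-1,0,1})}"
proof -
  have "{v :: int vec. dim_vec v = n \<and> (\<forall>j<n. v$j \<in> {-1,0,1})} \<subseteq>
        vec_of_list ` {xs. set xs \<subseteq> {-1,0,1} \<and> length xs = n}"
  proof
    fix v :: "int vec" assume v: "v \<in> {v. dim_vec v = n \<and> (\<forall>j<n. v$j \<in> {-1,0,1})}"
    have "v = vec_of_list (list_of_vec v)" by (simp add: vec_list)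
    moreover have "set (list_of_vec v) \<subseteq> {-1,0,1}"
    proof
      fix x assume "x \<in> set (list_of_vec v)"
      then obtain i where "i < dim_vec v" "x = v $ i" by (auto simp: in_set_conv_nth)
      thus "x \<in> {-1,0,1}" using v by auto
    qed
    moreover have "length (list_of_vec v) = n" using v by simp
    ultimately show "v \<in> vec_of_list ` {xs. set xs \<subseteq> {-1,0,1} \<and> length xs = n}" by blast
  qed
  moreover have "finite {xs. set xs \<subseteq> {-1,0,1::int} \<and> length xs = n}"
    by (rule finite_lists_length_eq) simp
  ultimately show ?thesis by (meson finite_imageI finite_subset)
qed

lemma finite_circuits: assumes A: "A \<in> carrier_mat d n" and tu: "totally_unimodular A"
  shows "finite (circuits A)"
  by (rule finite_subset[OF _ finite_pm1[of n]]) (use circuits_pm1[OF A tu] in blast)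

lemma graver_circuit:
  assumes A: "A \<in> carrier_mat d n" and tu: "totally_unimodular A" and g: "g \<in> graver A"
  shows "(\<forall>j<n. g$j \<in> {-1,0,1}) \<and> g \<in> circuits A"
proof -
  have dcA: "dim_col A = n" using A by simp
  have gk: "g \<in> int_ker A" and gnz: "g \<noteq> 0\<^sub>v n"
    and gmin: "\<forall>y \<in> int_ker A - {0\<^sub>v n}. y \<sqsubseteq> g \<longrightarrow> y = g"
    using g dcA by (auto simp: graver_def)
  have dg: "dim_vec g = n" using gk A by (simp add: int_ker_def)
  let ?gr = "map_vec real_of_int g"
  have grk: "?gr \<in> real_ker A" by (rule int_ker_real[OF A gk])
  have grnz: "?gr \<noteq> 0\<^sub>v n"
  proof
    assume "?gr = 0\<^sub>v n"
    hence "\<forall>j<n. g $ j = 0" using dg by (metis index_map_vec(1) index_zero_vec(1) of_int_eq_0_iff)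
    hence "g = 0\<^sub>v n" using dg by (intro eq_vecI) auto
    thus False using gnz by simp
  qed
  obtain z where z: "z \<in> real_ker A" "z \<noteq> 0\<^sub>v n"
      "\<forall>y \<in> real_ker A. y \<noteq> 0\<^sub>v (dim_col A) \<longrightarrow> \<not> (supp y \<subset> supp z)"
      "supp z \<subseteq> supp ?gr" "\<forall>j<n. z$j * ?gr$j \<ge> 0"
    using conf_circuit[OF A grk grnz] by blast
  have dz: "dim_vec z = n" using z(1) A by (simp add: real_ker_def)
  obtain h t where h: "h \<in> int_ker A" "\<forall>j<n. h$j \<in> {-1,0,1}" "h \<noteq> 0\<^sub>v n" "t \<noteq> 0"
     "map_vec real_of_int h = t \<cdot>\<^sub>v z"
    using circuit_pm1[OF A tu z(1,2) z(3)] by blast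
  have dh: "dim_vec h = n" using h(1) A by (simp add: int_ker_def)
  have ht: "\<forall>j<n. real_of_int (h$j) = t * z$j"
  proof (intro allI impI)
    fix j assume j: "j < n"
    have "map_vec real_of_int h $ j = (t \<cdot>\<^sub>v z) $ j" using h(5) by simp
    thus "real_of_int (h$j) = t * z$j" using j dh dz by simp
  qed
  define sg :: int where "sg = (if t > 0 then 1 else -1)"
  define h' where "h' = sg \<cdot>\<^sub>v h"
  have h'k: "h' \<in> int_ker A" unfolding h'_def by (rule int_ker_smult[OF A h(1)])
  have dh': "dim_vec h' = n" using dh by (simp add: h'_def)
  have h'j: "\<forall>j<n. real_of_int (h'$j) = (sg * t) * z$j" using ht dh by (simp add: h'_def)
  have sgt: "sg * t > 0" using h(4) by (auto simp: sg_def)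
  have h'ent: "\<forall>j<n. h'$j \<in> {-1,0,1}" using h(2) dh by (auto simp: h'_def sg_def)
  have h'nz: "h' \<noteq> 0\<^sub>v n"
  proof
    assume "h' = 0\<^sub>v n"
    hence "\<forall>j<n. h' $ j = 0" by simp
    hence "\<forall>j<n. h $ j = 0" using dh by (auto simp: h'_def sg_def split: if_splits)
    hence "h = 0\<^sub>v n" using dh by (intro eq_vecI) auto
    thus False using h(3) by simp
  qed
  have "h' \<sqsubseteq> g"
    unfolding conformal_le_def
  proof (intro conjI allI impI)
    show "dim_vec h' = dim_vec g" using dh' dg by simp
    fix i assume "i < dim_vec g" hence i: "i < n" using dg by simp
    have "real_of_int (h' $ i * g $ i) = (sg * t) * (z $ i * ?gr $ i)" using h'j i dg by simp
    also have "\<dots> \<ge> 0" using sgt z(5) i by simp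
    finally show "h' $ i * g $ i \<ge> 0" by (metis of_int_0_le_iff)
    show "\<bar>h' $ i\<bar> \<le> \<bar>g $ i\<bar>"
    proof (cases "h' $ i = 0")
      case False
      hence "z $ i \<noteq> 0" using h'j i by fastforce
      hence "i \<in> supp ?gr" using z(4) i dz by (auto simp: supp_def)
      hence "g $ i \<noteq> 0" using i dg by (auto simp: supp_def)
      thus ?thesis using h'ent i by auto
    qed simp
  qed
  hence geq: "h' = g" using gmin h'k h'nz by blast
  have ent: "\<forall>j<n. g$j \<in> {-1,0,1}" using h'ent geq by simp
  have ong: "on_line g z" using h'j geq dg dz by (auto simp: on_line_def)
  have lmin: "\<forall>h2. on_line h2 z \<longrightarrow> h2 \<noteq> 0\<^sub>v n \<longrightarrow> l1norm g \<le> l1norm h2"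
  proof (intro allI impI)
    fix h2 assume on2: "on_line h2 z" and nz2: "h2 \<noteq> 0\<^sub>v n"
    have dh2: "dim_vec h2 = n" using on2 dz by (simp add: on_line_def)
    obtain s where s: "\<forall>j<n. real_of_int (h2$j) = s * z$j" using on2 dz by (auto simp: on_line_def)
    obtain lam where lam: "\<forall>j<n. h2$j = lam * g$j"
      using line_mult[OF ent gnz dg _ s, of "sg * t"] h'j geq by blast
    have "lam \<noteq> 0"
    proof
      assume "lam = 0"
      hence "h2 = 0\<^sub>v n" using lam dh2 by (intro eq_vecI) auto
      thus False using nz2 by simp
    qed
    hence "\<bar>lam\<bar> \<ge> 1" by linarith
    have "l1norm h2 = \<bar>lam\<bar> * l1norm g" by (rule l1_mult[OF dh2 dg lam])
    also have "\<dots> \<ge> 1 * l1norm g" using \<open>\<bar>lam\<bar> \<ge> 1\<close> l1_nonneg[of g] by (intro mult_right_mono) auto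
    finally show "l1norm g \<le> l1norm h2" by simp
  qed
  have "g \<in> circuits A" unfolding circuits_def using z(1,2,3) ong gnz lmin dcA by auto
  thus ?thesis using ent by simp
qed

lemma sp_expand: "dim_vec v = n \<Longrightarrow> c \<bullet> v = (\<Sum>i<n. c$i * v$i)"
  by (simp add: scalar_prod_def atLeast0LessThan)

lemma l1_expand: "dim_vec v = n \<Longrightarrow> l1norm v = (\<Sum>i<n. \<bar>v$i\<bar>)"
  by (simp add: l1norm_def)

lemma conf_entry: assumes "y * s \<ge> 0" "\<bar>y\<bar> \<le> \<bar>s\<bar>"
  shows "(s - y) * s \<ge> (0::int)" "\<bar>s - y\<bar> \<le> \<bar>s\<bar>" "\<bar>s\<bar> = \<bar>y\<bar> + \<bar>s - y\<bar>"
  using assms by (auto simp: zero_le_mult_iff abs_if split: if_splits)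

lemma conf_diff: assumes "y \<sqsubseteq> S"
  shows "(S - y) \<sqsubseteq> S" "l1norm S = l1norm y + l1norm (S - y)"
proof -
  let ?n = "dim_vec S"
  have dy: "dim_vec y = ?n" using assms by (simp add: conformal_le_def)
  have e: "\<And>i. i < ?n \<Longrightarrow> y$i * S$i \<ge> 0 \<and> \<bar>y$i\<bar> \<le> \<bar>S$i\<bar>" using assms by (simp add: conformal_le_def)
  show "(S - y) \<sqsubseteq> S" unfolding conformal_le_def using dy e conf_entry(1,2) by auto
  have "l1norm S = (\<Sum>i<?n. \<bar>y$i\<bar> + \<bar>(S - y)$i\<bar>)"
    unfolding l1_expand[OF refl] by (rule sum.cong) (use dy e conf_entry(3) in auto)
  also have "\<dots> = l1norm y + l1norm (S - y)" using dy by (simp add: sum.distrib l1norm_def)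
  finally show "l1norm S = l1norm y + l1norm (S - y)" .
qed

lemma conf_lt: assumes "y \<sqsubseteq> S" "y \<noteq> S" shows "l1norm y < l1norm S"
proof -
  let ?n = "dim_vec S"
  have dy: "dim_vec y = ?n" using assms by (simp add: conformal_le_def)
  have e: "\<And>i. i < ?n \<Longrightarrow> y$i * S$i \<ge> 0 \<and> \<bar>y$i\<bar> \<le> \<bar>S$i\<bar>" using assms by (simp add: conformal_le_def)
  obtain i where i: "i < ?n" "y $ i \<noteq> S $ i" using assms(2) dy by (metis eq_vecI)
  have "\<bar>y$i\<bar> < \<bar>S$i\<bar>" using e[OF i(1)] i(2) by (auto simp: zero_le_mult_iff abs_if split: if_splits)
  hence "(\<Sum>j<?n. \<bar>y$j\<bar>) < (\<Sum>j<?n. \<bar>S$j\<bar>)"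
    using e i by (intro sum_strict_mono_ex1) auto
  thus ?thesis using dy by (simp add: l1norm_def)
qed

lemma conf_trans: "a \<sqsubseteq> b \<Longrightarrow> b \<sqsubseteq> c \<Longrightarrow> a \<sqsubseteq> c"
  unfolding conformal_le_def
  by (auto simp: zero_le_mult_iff abs_if split: if_splits) (smt (verit))+

lemma graver_below: assumes A: "A \<in> carrier_mat d n"
  shows "S \<in> int_ker A \<Longrightarrow> S \<noteq> 0\<^sub>v n \<Longrightarrow> \<exists>h\<in>graver A. h \<sqsubseteq> S"
proof (induction "nat (l1norm S)" arbitrary: S rule: less_induct)
  case less
  have dcA: "dim_col A = n" using A by simp
  show ?case
  proof (cases "S \<in> graver A")
    case True
    have "S \<sqsubseteq> S" by (simp add: conformal_le_def zero_le_mult_iff)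
    thus ?thesis using True by blast
  next
    case False
    then obtain y where y: "y \<in> int_ker A" "y \<noteq> 0\<^sub>v n" "y \<sqsubseteq> S" "y \<noteq> S"
      using less.prems dcA by (auto simp: graver_def)
    have "l1norm y < l1norm S" by (rule conf_lt[OF y(3,4)])
    hence "nat (l1norm y) < nat (l1norm S)" using l1_nonneg[of y] by simp
    then obtain h where "h \<in> graver A" "h \<sqsubseteq> y" using less.hyps y(1,2) by blast
    thus ?thesis using conf_trans y(3) by blast
  qed
qed

lemma int_ker_diff: assumes A: "A \<in> carrier_mat d n" "S \<in> int_ker A" "h \<in> int_ker A"
  shows "S - h \<in> int_ker A"
proof -
  have dS: "dim_vec S = n" "A *\<^sub>v S = 0\<^sub>v d" and dh: "dim_vec h = n" "A *\<^sub>v h = 0\<^sub>v d"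
    using assms by (auto simp: int_ker_def)
  have "A *\<^sub>v (S - h) = A *\<^sub>v S - A *\<^sub>v h"
    by (rule mult_minus_distrib_mat_vec[OF A(1) carrier_vecI[OF dS(1)] carrier_vecI[OF dh(1)]])
  also have "\<dots> = 0\<^sub>v d - 0\<^sub>v d" by (simp only: dS(2) dh(2))
  also have "\<dots> = 0\<^sub>v d" by (rule minus_cancel_vec) simp
  finally have e: "A *\<^sub>v (S - h) = 0\<^sub>v d" .
  have "dim_vec (S - h) = n" using dh by simp
  thus ?thesis using e A unfolding int_ker_def by simp
qed

lemma feas_diff: assumes A: "A \<in> carrier_mat d n" and "feasible A b u x" "feasible A b u y"
  shows "y - x \<in> int_ker A"
proof -
  have dS: "dim_vec x = n" "A *\<^sub>v x = b" and dh: "dim_vec y = n" "A *\<^sub>v y = b"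
    using assms by (auto simp: feasible_def)
  have bc: "b \<in> carrier_vec d" using dS(2) A by (metis carrier_vecI dim_mult_mat_vec carrier_matD(1))
  have "A *\<^sub>v (y - x) = A *\<^sub>v y - A *\<^sub>v x"
    by (rule mult_minus_distrib_mat_vec[OF A(1) carrier_vecI[OF dh(1)] carrier_vecI[OF dS(1)]])
  also have "\<dots> = b - b" by (simp only: dS(2) dh(2))
  also have "\<dots> = 0\<^sub>v d" by (rule minus_cancel_vec[OF bc])
  finally have e: "A *\<^sub>v (y - x) = 0\<^sub>v d" .
  have "dim_vec (y - x) = n" using dS by simp
  thus ?thesis using e A unfolding int_ker_def by simp
qed

lemma feas_conf: assumes A: "A \<in> carrier_mat d n" and fx: "feasible A b u x" and fs: "feasible A b u (x + S)"
  and y: "y \<sqsubseteq> S" "y \<in> int_ker A"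
  shows "feasible A b u (x + y)"
proof -
  have dx: "dim_vec x = n" "A *\<^sub>v x = b" and bx: "\<forall>i<n. 0 \<le> x $ i \<and> x $ i \<le> u $ i" using fx A by (auto simp: feasible_def)
  have dy: "dim_vec y = n" "A *\<^sub>v y = 0\<^sub>v d" using y(2) A by (auto simp: int_ker_def)
  have dS: "dim_vec S = n" using y(1) dy by (simp add: conformal_le_def)
  have bs: "\<forall>i<n. 0 \<le> (x + S) $ i \<and> (x + S) $ i \<le> u $ i" using fs A by (auto simp: feasible_def)
  have e: "\<And>i. i < n \<Longrightarrow> y$i * S$i \<ge> 0 \<and> \<bar>y$i\<bar> \<le> \<bar>S$i\<bar>" using y(1) dS by (simp add: conformal_le_def)
  have bc: "b \<in> carrier_vec d" using dx(2) A by (metis carrier_vecI dim_mult_mat_vec carrier_matD(1))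
  have "A *\<^sub>v (x + y) = A *\<^sub>v x + A *\<^sub>v y"
    by (rule mult_add_distrib_mat_vec[OF A carrier_vecI[OF dx(1)] carrier_vecI[OF dy(1)]])
  also have "\<dots> = b + 0\<^sub>v d" by (simp only: dx(2) dy(2))
  also have "\<dots> = b" by (rule right_zero_vec[OF bc])
  finally have "A *\<^sub>v (x + y) = b" .
  moreover have "\<forall>i<n. 0 \<le> (x + y) $ i \<and> (x + y) $ i \<le> u $ i"
  proof (intro allI impI)
    fix i assume i: "i < n"
    have "0 \<le> x $ i + S $ i \<and> x $ i + S $ i \<le> u $ i" using bs i dS by simp
    thus "0 \<le> (x + y) $ i \<and> (x + y) $ i \<le> u $ i" using bx i e[OF i] dy
      by (auto simp: zero_le_mult_iff abs_if split: if_splits)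
  qed
  ultimately show ?thesis using A dx dy by (simp add: feasible_def)
qed

lemma bound:
  assumes A: "A \<in> carrier_mat d n" and dc: "dim_vec c = n" and fx: "feasible A b u x"
    and r: "\<forall>g\<in>graver A. feasible A b u (x + g) \<longrightarrow> - real_of_int (c \<bullet> g) \<le> r * real_of_int (l1norm g)"
  shows "S \<in> int_ker A \<Longrightarrow> feasible A b u (x + S) \<Longrightarrow> - real_of_int (c \<bullet> S) \<le> r * real_of_int (l1norm S)"
proof (induction "nat (l1norm S)" arbitrary: S rule: less_induct)
  case less
  have dS: "dim_vec S = n" using less.prems A by (simp add: int_ker_def)
  show ?case
  proof (cases "S = 0\<^sub>v n")
    case True
    thus ?thesis using dc by (simp add: l1norm_def sp_expand[of _ n])
  next
    case False
    obtain h where h: "h \<in> graver A" "h \<sqsubseteq> S" using graver_below[OF A less.prems(1) False] by blast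
    have hk: "h \<in> int_ker A" and hnz: "h \<noteq> 0\<^sub>v n" using h(1) A by (auto simp: graver_def)
    have dh: "dim_vec h = n" using hk A by (simp add: int_ker_def)
    have fh: "feasible A b u (x + h)" by (rule feas_conf[OF A fx less.prems(2) h(2) hk])
    have shk: "S - h \<in> int_ker A" by (rule int_ker_diff[OF A less.prems(1) hk])
    have fsh: "feasible A b u (x + (S - h))" by (rule feas_conf[OF A fx less.prems(2) conf_diff(1)[OF h(2)] shk])
    have l1: "l1norm S = l1norm h + l1norm (S - h)" by (rule conf_diff(2)[OF h(2)])
    have "l1norm h > 0" by (rule l1_pos[OF dh hnz])
    hence "nat (l1norm (S - h)) < nat (l1norm S)" using l1 l1_nonneg[of "S - h"] by simp
    hence ih: "- real_of_int (c \<bullet> (S - h)) \<le> r * real_of_int (l1norm (S - h))"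
      using less.hyps shk fsh by blast
    have rh: "- real_of_int (c \<bullet> h) \<le> r * real_of_int (l1norm h)" using r h(1) fh by blast
    have "c \<bullet> S = c \<bullet> h + c \<bullet> (S - h)"
      using dS dh dc by (simp add: sp_expand[of _ n] sum.distrib[symmetric] algebra_simps)
    thus ?thesis using ih rh l1 by (simp add: algebra_simps)
  qed
qed

lemma sp_lin: fixes S :: "int vec" assumes "dim_vec S = n" "dim_vec D = n" "dim_vec g = n" "\<forall>i<n. S$i = D$i + a * g$i"
  shows "c \<bullet> S = c \<bullet> D + a * (c \<bullet> g)"
proof -
  have "c \<bullet> S = (\<Sum>i<n. c$i * D$i + a * (c$i * g$i))"
    using assms by (simp add: sp_expand[of _ n] algebra_simps)
  thus ?thesis using assms by (simp add: sp_expand[of _ n] sum.distrib sum_distrib_left)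
qed

lemma l1_tri: fixes S :: "int vec" assumes "dim_vec S = n" "dim_vec D = n" "dim_vec g = n" "\<forall>i<n. S$i = D$i + a * g$i" "a \<ge> 0"
  shows "l1norm S \<le> l1norm D + a * l1norm g"
proof -
  have "l1norm S = (\<Sum>i<n. \<bar>D$i + a * g$i\<bar>)" using assms by (simp add: l1_expand[of _ n])
  also have "\<dots> \<le> (\<Sum>i<n. \<bar>D$i\<bar> + a * \<bar>g$i\<bar>)"
    by (rule sum_mono) (use assms(5) in \<open>simp add: abs_mult abs_triangle_ineq[THEN order_trans]\<close>)
  also have "\<dots> = l1norm D + a * l1norm g" using assms by (simp add: l1_expand[of _ n] sum.distrib sum_distrib_left)
  finally show ?thesis .
qed

lemma l1_eq_conf: fixes S :: "int vec" assumes "dim_vec S = n" "dim_vec D = n" "dim_vec g = n" "\<forall>i<n. S$i = D$i + a * g$i" "a > 0"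
  and eq: "l1norm S = l1norm D + a * l1norm g"
  shows "\<forall>i<n. D$i * g$i \<ge> 0"
proof (rule ccontr)
  assume "\<not> ?thesis"
  then obtain i0 where i0: "i0 < n" "D$i0 * g$i0 < 0" by auto
  have le: "\<And>i. i \<in> {..<n} \<Longrightarrow> \<bar>D$i + a * g$i\<bar> \<le> \<bar>D$i\<bar> + a * \<bar>g$i\<bar>"
    using assms(5) by (simp add: abs_mult abs_triangle_ineq[THEN order_trans])
  have "\<bar>D$i0 + a * g$i0\<bar> < \<bar>D$i0\<bar> + a * \<bar>g$i0\<bar>"
    using i0(2) assms(5) by (auto simp: abs_if mult_less_0_iff zero_less_mult_iff)
  hence "(\<Sum>i<n. \<bar>D$i + a * g$i\<bar>) < (\<Sum>i<n. \<bar>D$i\<bar> + a * \<bar>g$i\<bar>)"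
    using le i0(1) by (intro sum_strict_mono_ex1) auto
  moreover have "l1norm S = (\<Sum>i<n. \<bar>D$i + a * g$i\<bar>)" using assms by (simp add: l1_expand[of _ n])
  moreover have "(\<Sum>i<n. \<bar>D$i\<bar> + a * \<bar>g$i\<bar>) = l1norm D + a * l1norm g"
    using assms by (simp add: l1_expand[of _ n] sum.distrib sum_distrib_left)
  ultimately show False using eq by simp
qed

lemma graver_l1: assumes A: "A \<in> carrier_mat d n" "g \<in> graver A" shows "l1norm g > 0" "dim_vec g = n"
proof -
  have "g \<in> int_ker A" "g \<noteq> 0\<^sub>v n" using assms by (auto simp: graver_def)
  moreover hence "dim_vec g = n" using A by (simp add: int_ker_def)
  ultimately show "l1norm g > 0" "dim_vec g = n" using l1_pos by auto
qed

lemma ratio_le: assumes "l1norm g > 0"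
  shows "sd_ratio c g \<le> r \<longleftrightarrow> - real_of_int (c \<bullet> g) \<le> r * real_of_int (l1norm g)"
  unfolding sd_ratio_def by (rule pos_divide_le_eq) (use assms in simp)

lemma ratio_id: assumes "l1norm g > 0"
  shows "- real_of_int (c \<bullet> g) = sd_ratio c g * real_of_int (l1norm g)"
  using assms by (simp add: sd_ratio_def)

lemma add_diff_vec: "dim_vec x = dim_vec y \<Longrightarrow> x + (y - x) = (y :: int vec)"
  by (intro eq_vecI) auto

lemma stops_optimal:
  assumes A: "A \<in> carrier_mat d n" and dc: "dim_vec c = n" and fx: "feasible A b u x"
    and st: "sd_stops A b c u x"
  shows "optimal A b c u x"
proof -
  have r: "\<forall>g\<in>graver A. feasible A b u (x + g) \<longrightarrow> - real_of_int (c \<bullet> g) \<le> 0 * real_of_int (l1norm g)"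
  proof (intro ballI impI)
    fix g assume g: "g \<in> graver A" "feasible A b u (x + g)"
    have "\<not> sd_ratio c g > 0" using st g unfolding sd_stops_def by blast
    hence "sd_ratio c g \<le> 0" by simp
    thus "- real_of_int (c \<bullet> g) \<le> 0 * real_of_int (l1norm g)"
      using ratio_le[OF graver_l1(1)[OF A g(1)]] by blast
  qed
  have "c \<bullet> x \<le> c \<bullet> y" if fy: "feasible A b u y" for y
  proof -
    have dx: "dim_vec x = n" and dy: "dim_vec y = n" using fx fy A by (auto simp: feasible_def)
    have Sk: "y - x \<in> int_ker A" by (rule feas_diff[OF A fx fy])
    have "x + (y - x) = y" using dx dy by (simp add: add_diff_vec)
    hence "feasible A b u (x + (y - x))" using fy by simp
    hence "- real_of_int (c \<bullet> (y - x)) \<le> 0 * real_of_int (l1norm (y - x))"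
      using bound[OF A dc fx r Sk] by blast
    moreover have "c \<bullet> (y - x) = c \<bullet> y - c \<bullet> x"
      using dx dy by (simp add: sp_expand[of _ n] sum_subtractf algebra_simps)
    ultimately show ?thesis by simp
  qed
  thus ?thesis using fx by (simp add: optimal_def)
qed

locale sdrun =
  fixes A :: "int mat" and b c u :: "int vec" and d n :: nat and xs :: "nat \<Rightarrow> int vec" and K :: nat
    and G :: "nat \<Rightarrow> int vec" and Al :: "nat \<Rightarrow> int"
  assumes A: "A \<in> carrier_mat d n" and tu: "totally_unimodular A" and dc: "dim_vec c = n"
    and f0: "feasible A b u (xs 0)"
    and step: "\<And>k. k < K \<Longrightarrow> G k \<in> graver A \<and> feasible A b u (xs k + G k) \<and>
      (\<forall>g'\<in>graver A. feasible A b u (xs k + g') \<longrightarrow> sd_ratio c g' \<le> sd_ratio c (G k)) \<and>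
      sd_ratio c (G k) > 0 \<and> feasible A b u (xs k + Al k \<cdot>\<^sub>v G k) \<and>
      (\<forall>\<beta>::int. feasible A b u (xs k + \<beta> \<cdot>\<^sub>v G k) \<longrightarrow> \<beta> \<le> Al k) \<and>
      xs (Suc k) = xs k + Al k \<cdot>\<^sub>v G k"
begin

abbreviation r where "r k \<equiv> sd_ratio c (G k)"

lemma feas: "k \<le> K \<Longrightarrow> feasible A b u (xs k)"
proof (induction k)
  case 0 thus ?case using f0 by simp
next
  case (Suc k) thus ?case using step[of k] by simp
qed

lemma dxs: "k \<le> K \<Longrightarrow> dim_vec (xs k) = n"
  using feas A by (simp add: feasible_def)

lemma Gfacts: assumes "k < K"
  shows "G k \<in> graver A" "dim_vec (G k) = n" "l1norm (G k) > 0" "\<forall>j<n. G k $ j \<in> {-1,0,1}"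
    "G k \<in> circuits A" "r k > 0" "feasible A b u (xs k + G k)"
proof -
  show g: "G k \<in> graver A" using step[OF assms] by blast
  show "dim_vec (G k) = n" "l1norm (G k) > 0" using graver_l1[OF A g] by auto
  show "\<forall>j<n. G k $ j \<in> {-1,0,1}" "G k \<in> circuits A" using graver_circuit[OF A tu g] by auto
  show "r k > 0" "feasible A b u (xs k + G k)" using step[OF assms] by auto
qed

lemma xs_entry: assumes "k < K" "i < n"
  shows "xs (Suc k) $ i = xs k $ i + Al k * G k $ i"
proof -
  have "xs (Suc k) = xs k + Al k \<cdot>\<^sub>v G k" using step[OF assms(1)] by blast
  thus ?thesis using assms Gfacts(2)[OF assms(1)] dxs[of k] by simp
qed

lemma Al_pos: assumes "k < K" shows "Al k \<ge> 1"
proof -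
  have "feasible A b u (xs k + 1 \<cdot>\<^sub>v G k)" using Gfacts(7)[OF assms] by simp
  thus ?thesis using step[OF assms] by blast
qed

lemma bound_k: assumes "k < K" "S \<in> int_ker A" "feasible A b u (xs k + S)"
  shows "- real_of_int (c \<bullet> S) \<le> r k * real_of_int (l1norm S)"
proof -
  have "\<forall>g\<in>graver A. feasible A b u (xs k + g) \<longrightarrow> - real_of_int (c \<bullet> g) \<le> r k * real_of_int (l1norm g)"
  proof (intro ballI impI)
    fix g assume g: "g \<in> graver A" "feasible A b u (xs k + g)"
    hence "sd_ratio c g \<le> r k" using step[OF assms(1)] by blast
    thus "- real_of_int (c \<bullet> g) \<le> r k * real_of_int (l1norm g)" using ratio_le[OF graver_l1(1)[OF A g(1)]] by blast
  qed
  thus ?thesis using bound[OF A dc feas[of k] _ assms(2,3)] assms(1) by simp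
qed

lemma cG: assumes "k < K" shows "- real_of_int (c \<bullet> G k) = r k * real_of_int (l1norm (G k))"
  by (rule ratio_id[OF Gfacts(3)[OF assms]])


lemma diff_dim: assumes "l \<le> K" "j \<le> K" shows "dim_vec (xs l - xs j) = n"
  using assms dxs[of l] dxs[of j] by auto

lemma diff_entry: assumes "l \<le> K" "j \<le> K" "i < n"
  shows "(xs l - xs j) $ i = xs l $ i - xs j $ i" "dim_vec (xs l - xs j) = n"
  using assms dxs[of l] dxs[of j] by auto

lemma mono_adj: assumes "Suc k < K" shows "r (Suc k) \<le> r k"
proof -
  have k: "k < K" using assms by simp
  define T where "T = xs (Suc k) + G (Suc k)"
  define S where "S = T - xs k"
  have fT: "feasible A b u T" using Gfacts(7)[OF assms] by (simp add: T_def)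
  have dT: "dim_vec T = n" using fT A by (simp add: feasible_def)
  have dk: "dim_vec (xs k) = n" using dxs k by simp
  have Sk: "S \<in> int_ker A" unfolding S_def by (rule feas_diff[OF A feas fT]) (use k in simp)
  have "xs k + S = T" unfolding S_def using dT dk by (simp add: add_diff_vec)
  hence fS: "feasible A b u (xs k + S)" using fT by simp
  have dS: "dim_vec S = n" using dT dk by (simp add: S_def)
  have Se: "\<forall>i<n. S$i = G (Suc k) $ i + Al k * G k $ i"
    using xs_entry[OF k] dT dk Gfacts(2)[OF assms] by (simp add: S_def T_def)
  have G0: "dim_vec (G k) = n" and G1: "dim_vec (G (Suc k)) = n" using Gfacts(2) assms k by auto
  have "c \<bullet> S = c \<bullet> G (Suc k) + Al k * (c \<bullet> G k)" by (rule sp_lin[OF dS G1 G0 Se])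
  hence "- real_of_int (c \<bullet> S) = (- real_of_int (c \<bullet> G (Suc k))) + real_of_int (Al k) * (- real_of_int (c \<bullet> G k))"
    by (simp add: algebra_simps)
  hence e1: "- real_of_int (c \<bullet> S) = r (Suc k) * real_of_int (l1norm (G (Suc k)))
      + real_of_int (Al k) * (r k * real_of_int (l1norm (G k)))"
    by (simp only: cG[OF assms] cG[OF k])
  have "l1norm S \<le> l1norm (G (Suc k)) + Al k * l1norm (G k)"
    by (rule l1_tri[OF dS G1 G0 Se]) (use Al_pos[OF k] in simp)
  hence "real_of_int (l1norm S) \<le> real_of_int (l1norm (G (Suc k))) + real_of_int (Al k) * real_of_int (l1norm (G k))"
    by (metis of_int_add of_int_le_iff of_int_mult)
  hence "r k * real_of_int (l1norm S) \<le> r k * (real_of_int (l1norm (G (Suc k))) + real_of_int (Al k) * real_of_int (l1norm (G k)))"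
    using Gfacts(6)[OF k] by (intro mult_left_mono) auto
  hence e2: "r k * real_of_int (l1norm S) \<le> r k * real_of_int (l1norm (G (Suc k))) + real_of_int (Al k) * (r k * real_of_int (l1norm (G k)))"
    by (simp add: algebra_simps)
  have "- real_of_int (c \<bullet> S) \<le> r k * real_of_int (l1norm S)" by (rule bound_k[OF k Sk fS])
  hence "r (Suc k) * real_of_int (l1norm (G (Suc k))) \<le> r k * real_of_int (l1norm (G (Suc k)))"
    using e1 e2 by linarith
  thus ?thesis using Gfacts(3)[OF assms] by simp
qed

lemma mono: "j \<le> l \<Longrightarrow> l < K \<Longrightarrow> r l \<le> r j"
proof (induction l)
  case 0 thus ?case by simp
next
  case (Suc l)
  show ?case
  proof (cases "j = Suc l")
    case False
    hence "j \<le> l" using Suc.prems by simp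
    thus ?thesis using Suc mono_adj[of l] by force
  qed simp
qed

lemma inv_step: assumes jl: "j \<le> l" and lK: "l < K" and rl: "r l = r j"
  and inv: "- real_of_int (c \<bullet> (xs l - xs j)) = r j * real_of_int (l1norm (xs l - xs j))"
  shows "- real_of_int (c \<bullet> (xs (Suc l) - xs j)) = r j * real_of_int (l1norm (xs (Suc l) - xs j))"
    and "\<forall>p<n. (xs l - xs j) $ p * G l $ p \<ge> 0"
proof -
  have jK: "j < K" using jl lK by simp
  define D where "D = xs l - xs j"
  define S where "S = xs (Suc l) - xs j"
  have dD: "dim_vec D = n" unfolding D_def by (rule diff_dim) (use jl lK in auto)
  have dS: "dim_vec S = n" unfolding S_def by (rule diff_dim) (use jl lK in auto)
  have dG: "dim_vec (G l) = n" using Gfacts(2)[OF lK] .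
  have Se: "\<forall>i<n. S$i = D$i + Al l * G l $ i"
    using diff_entry[of "Suc l" j] diff_entry[of l j] xs_entry[OF lK] jl lK by (simp add: S_def D_def)
  have fj: "feasible A b u (xs j)" using feas jK by simp
  have fl: "feasible A b u (xs (Suc l))" using feas lK by simp
  have Sk: "S \<in> int_ker A" unfolding S_def by (rule feas_diff[OF A fj fl])
  have "xs j + S = xs (Suc l)" unfolding S_def using dxs[of j] dxs[of "Suc l"] jK lK by (simp add: add_diff_vec)
  hence fS: "feasible A b u (xs j + S)" using fl by simp
  have b1: "- real_of_int (c \<bullet> S) \<le> r j * real_of_int (l1norm S)" by (rule bound_k[OF jK Sk fS])
  have "c \<bullet> S = c \<bullet> D + Al l * (c \<bullet> G l)" by (rule sp_lin[OF dS dD dG Se])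
  hence "- real_of_int (c \<bullet> S) = (- real_of_int (c \<bullet> D)) + real_of_int (Al l) * (- real_of_int (c \<bullet> G l))"
    by (simp add: algebra_simps)
  also have "\<dots> = r j * real_of_int (l1norm D) + real_of_int (Al l) * (r l * real_of_int (l1norm (G l)))"
    by (simp only: cG[OF lK] inv[folded D_def])
  finally have e1: "- real_of_int (c \<bullet> S) = r j * (real_of_int (l1norm D) + real_of_int (Al l) * real_of_int (l1norm (G l)))"
    using rl by (simp add: algebra_simps)
  have tri: "l1norm S \<le> l1norm D + Al l * l1norm (G l)"
    by (rule l1_tri[OF dS dD dG Se]) (use Al_pos[OF lK] in simp)
  have "r j * (real_of_int (l1norm D) + real_of_int (Al l) * real_of_int (l1norm (G l))) \<le> r j * real_of_int (l1norm S)"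
    using b1 e1 by simp
  hence "real_of_int (l1norm D) + real_of_int (Al l) * real_of_int (l1norm (G l)) \<le> real_of_int (l1norm S)"
    using Gfacts(6)[OF jK] by (simp add: mult_le_cancel_left)
  hence "l1norm D + Al l * l1norm (G l) \<le> l1norm S" by (metis of_int_add of_int_le_iff of_int_mult)
  hence eq: "l1norm S = l1norm D + Al l * l1norm (G l)" using tri by simp
  show "- real_of_int (c \<bullet> (xs (Suc l) - xs j)) = r j * real_of_int (l1norm (xs (Suc l) - xs j))"
    using e1 eq by (simp add: S_def[symmetric])
  have "Al l > 0" using Al_pos[OF lK] by simp
  thus "\<forall>p<n. (xs l - xs j) $ p * G l $ p \<ge> 0"
    using l1_eq_conf[OF dS dD dG Se _ eq] by (simp add: D_def)
qed

lemma self_diff: assumes "j \<le> K" shows "- real_of_int (c \<bullet> (xs j - xs j)) = r j * real_of_int (l1norm (xs j - xs j))"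
proof -
  have dj: "dim_vec (xs j) = n" using dxs assms by simp
  have z: "xs j - xs j = 0\<^sub>v n" by (rule minus_cancel_vec, rule carrier_vecI, rule dj)
  have c0: "c \<bullet> 0\<^sub>v n = 0" by (rule scalar_prod_right_zero, rule carrier_vecI, rule dc)
  have l0: "l1norm (0\<^sub>v n :: int vec) = 0" by (simp add: l1norm_def)
  have 1: "c \<bullet> (xs j - xs j) = 0" unfolding z by (rule c0)
  have 2: "l1norm (xs j - xs j) = 0" unfolding z by (rule l0)
  show ?thesis unfolding 1 2 by simp
qed

lemma run: "j \<le> l \<Longrightarrow> l \<le> K \<Longrightarrow> (\<forall>i. j \<le> i \<and> i < l \<longrightarrow> r i = r j) \<Longrightarrow>
  - real_of_int (c \<bullet> (xs l - xs j)) = r j * real_of_int (l1norm (xs l - xs j))"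
proof (induction l)
  case 0
  hence j: "j = 0" using 0(1) by simp
  have "0 \<le> K" by simp
  from self_diff[OF this] show ?case unfolding j .
next
  case (Suc l)
  show ?case
  proof (cases "j = Suc l")
    case True
    have "Suc l \<le> K" using Suc.prems(2) by simp
    from self_diff[OF this] show ?thesis unfolding True .
  next
    case False
    hence jl: "j \<le> l" using Suc.prems(1) by simp
    have lK: "l \<le> K" using Suc.prems(2) by simp
    have rr: "\<forall>i. j \<le> i \<and> i < l \<longrightarrow> r i = r j" using Suc.prems(3) less_SucI by blast
    have IH: "- real_of_int (c \<bullet> (xs l - xs j)) = r j * real_of_int (l1norm (xs l - xs j))"
      by (rule Suc.IH[OF jl lK rr])
    have l1: "l < K" using Suc.prems(2) by simp
    have rl: "r l = r j" using Suc.prems(3) jl lessI by blast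
    show ?thesis by (rule inv_step(1)[OF jl l1 rl IH])
  qed
qed

lemma conf_run: assumes "j \<le> l" "l < K" "\<forall>i. j \<le> i \<and> i \<le> l \<longrightarrow> r i = r j"
  shows "\<forall>p<n. (xs l - xs j) $ p * G l $ p \<ge> 0"
proof -
  have rl: "r l = r j" using assms(3,1) by blast
  have rr: "\<forall>i. j \<le> i \<and> i < l \<longrightarrow> r i = r j" using assms(3) less_imp_le by blast
  have lK: "l \<le> K" using assms(2) by simp
  show ?thesis by (rule inv_step(2)[OF assms(1,2) rl run[OF assms(1) lK rr]])
qed

definition outbox where "outbox k p \<longleftrightarrow> \<not> (0 \<le> xs (Suc k) $ p + G k $ p \<and> xs (Suc k) $ p + G k $ p \<le> u $ p)"

lemma bounding: assumes k: "k < K" shows "\<exists>p<n. G k $ p \<noteq> 0 \<and> outbox k p"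
proof (rule ccontr)
  assume "\<not> ?thesis"
  hence nb: "\<And>p. p < n \<Longrightarrow> G k $ p \<noteq> 0 \<Longrightarrow> \<not> outbox k p" by blast
  have f1: "feasible A b u (xs (Suc k))" using feas k by simp
  have dG: "dim_vec (G k) = n" using Gfacts(2)[OF k] .
  have d1: "dim_vec (xs (Suc k)) = n" using dxs k by simp
  have dk: "dim_vec (xs k) = n" using dxs k by simp
  have box: "\<forall>p<n. 0 \<le> (xs (Suc k) + G k) $ p \<and> (xs (Suc k) + G k) $ p \<le> u $ p"
  proof (intro allI impI)
    fix p assume p: "p < n"
    show "0 \<le> (xs (Suc k) + G k) $ p \<and> (xs (Suc k) + G k) $ p \<le> u $ p"
    proof (cases "G k $ p = 0")
      case True thus ?thesis using f1 p d1 dG A by (simp add: feasible_def)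
    next
      case False thus ?thesis using nb[OF p False] p dG by (simp add: outbox_def)
    qed
  qed
  have gk: "G k \<in> int_ker A" using Gfacts(1)[OF k] by (simp add: graver_def)
  have "A *\<^sub>v G k = 0\<^sub>v d" using gk A by (simp add: int_ker_def)
  have Ax: "A *\<^sub>v xs (Suc k) = b" using f1 by (simp add: feasible_def)
  have bc: "b \<in> carrier_vec d" using Ax A by (metis carrier_vecI dim_mult_mat_vec carrier_matD(1))
  have "A *\<^sub>v (xs (Suc k) + G k) = A *\<^sub>v xs (Suc k) + A *\<^sub>v G k"
    by (rule mult_add_distrib_mat_vec[OF A carrier_vecI[OF d1] carrier_vecI[OF dG]])
  also have "\<dots> = b + 0\<^sub>v d" by (simp only: Ax \<open>A *\<^sub>v G k = 0\<^sub>v d\<close>)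
  also have "\<dots> = b" by (rule right_zero_vec[OF bc])
  finally have "feasible A b u (xs (Suc k) + G k)" using box d1 dG A by (simp add: feasible_def)
  moreover have "xs (Suc k) + G k = xs k + (Al k + 1) \<cdot>\<^sub>v G k"
    by (intro eq_vecI) (use xs_entry[OF k] d1 dG dk in \<open>auto simp: algebra_simps\<close>)
  ultimately have "Al k + 1 \<le> Al k" using step[OF k] by metis
  thus False by simp
qed

lemma frozen_G: assumes k: "k < K" and p: "p < n" "G k $ p \<noteq> 0" "outbox k p"
  and kl: "k < l" and lK: "l < K" and rr: "\<forall>i. k \<le> i \<and> i \<le> l \<longrightarrow> r i = r k"
  and xl: "xs l $ p = xs (Suc k) $ p"
  shows "G l $ p = 0"
proof (rule ccontr)
  assume nz: "G l $ p \<noteq> 0"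
  have c1: "(xs l - xs k) $ p * G l $ p \<ge> 0" using conf_run[OF less_imp_le[OF kl] lK rr] p(1) by blast
  have "(xs l - xs k) $ p = Al k * G k $ p"
    using diff_entry[of l k p] xl xs_entry[OF k p(1)] kl lK p by simp
  hence "Al k * (G k $ p * G l $ p) \<ge> 0" using c1 by (simp add: algebra_simps)
  hence "G k $ p * G l $ p \<ge> 0" using Al_pos[OF k] by (simp add: zero_le_mult_iff)
  moreover have "G k $ p \<in> {-1,1}" "G l $ p \<in> {-1,1}" using Gfacts(4)[OF k] Gfacts(4)[OF lK] p nz by auto
  ultimately have same: "G l $ p = G k $ p" by auto
  have "feasible A b u (xs l + G l)" using Gfacts(7)[OF lK] .
  hence "0 \<le> (xs l + G l) $ p \<and> (xs l + G l) $ p \<le> u $ p" using p A unfolding feasible_def by blast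
  moreover have "(xs l + G l) $ p = xs (Suc k) $ p + G k $ p"
    using same xl p dxs[of l] Gfacts(2)[OF lK] lK by simp
  ultimately show False using p(3) by (simp add: outbox_def)
qed

lemma frozen: assumes k: "k < K" and p: "p < n" "G k $ p \<noteq> 0" "outbox k p"
  shows "Suc k \<le> l \<Longrightarrow> l \<le> K \<Longrightarrow> (\<forall>i. k \<le> i \<and> i < l \<longrightarrow> r i = r k) \<Longrightarrow> xs l $ p = xs (Suc k) $ p"
proof (induction l)
  case 0 thus ?case by simp
next
  case (Suc l)
  show ?case
  proof (cases "Suc k = Suc l")
    case False
    hence kl: "Suc k \<le> l" using Suc.prems(1) by simp
    have lK: "l < K" using Suc.prems(2) by simp
    have rr1: "\<forall>i. k \<le> i \<and> i < l \<longrightarrow> r i = r k" using Suc.prems(3) less_SucI by blast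
    have rr2: "\<forall>i. k \<le> i \<and> i \<le> l \<longrightarrow> r i = r k" using Suc.prems(3) le_imp_less_Suc by blast
    have xl: "xs l $ p = xs (Suc k) $ p" by (rule Suc.IH[OF kl less_imp_le[OF lK] rr1])
    have kl': "k < l" using kl by simp
    have "G l $ p = 0" by (rule frozen_G[OF k p kl' lK rr2 xl])
    thus ?thesis using xs_entry[OF lK p(1)] xl by simp
  qed simp
qed

definition pk where "pk k = (SOME p. p < n \<and> G k $ p \<noteq> 0 \<and> outbox k p)"

lemma pk: assumes "k < K" shows "pk k < n" "G k $ pk k \<noteq> 0" "outbox k (pk k)"
  using someI_ex[OF bounding[OF assms]] unfolding pk_def by blast+

lemma fiber: "card {k. k < K \<and> r k = v} \<le> n"
proof -
  let ?I = "{k. k < K \<and> r k = v}"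
  have "inj_on pk ?I"
  proof (rule inj_onI)
    have key: "pk j \<noteq> pk l" if j: "j \<in> ?I" and l: "l \<in> ?I" and jl: "j < l" for j l
    proof -
      have lK: "l < K" and jK: "j < K" using l j jl by auto
      have rr: "\<forall>i. j \<le> i \<and> i \<le> l \<longrightarrow> r i = r j"
      proof (intro allI impI)
        fix i assume i: "j \<le> i \<and> i \<le> l"
        have "r l \<le> r i" using mono[of i l] i lK by simp
        moreover have "r i \<le> r j" using mono[of j i] i lK by simp
        ultimately show "r i = r j" using j l by simp
      qed
      have rr1: "\<forall>i. j \<le> i \<and> i < l \<longrightarrow> r i = r j" using rr less_imp_le by blast
      have xl: "xs l $ pk j = xs (Suc j) $ pk j"
        by (rule frozen[OF jK pk[OF jK] _ _ rr1]) (use jl lK in simp_all)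
      have "G l $ pk j = 0" by (rule frozen_G[OF jK pk[OF jK] jl lK rr xl])
      thus ?thesis using pk(2)[OF lK] by auto
    qed
    fix j l assume jl: "j \<in> ?I" "l \<in> ?I" "pk j = pk l"
    show "j = l"
    proof (rule ccontr)
      assume "j \<noteq> l"
      hence "j < l \<or> l < j" by arith
      thus False
      proof
        assume "j < l" thus False using key[OF jl(1,2)] jl(3) by blast
      next
        assume "l < j" thus False using key[OF jl(2,1)] jl(3) by simp
      qed
    qed
  qed
  moreover have "pk ` ?I \<subseteq> {..<n}" using pk(1) by blast
  ultimately have "card ?I \<le> card {..<n}" by (intro card_inj_on_le) simp_all
  thus ?thesis by simp
qed

lemma count: "K \<le> n * card (r ` {..<K})"
proof -
  have e: "{..<K} = (\<Union>v\<in>r ` {..<K}. {k. k < K \<and> r k = v})" by blast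
  have "K = card {..<K}" by simp
  also have "\<dots> = card (\<Union>v\<in>r ` {..<K}. {k. k < K \<and> r k = v})" using e by simp
  finally have "K = card (\<Union>v\<in>r ` {..<K}. {k. k < K \<and> r k = v})" .
  also have "\<dots> \<le> (\<Sum>v\<in>r ` {..<K}. card {k. k < K \<and> r k = v})" by (rule card_UN_le) simp
  also have "\<dots> \<le> (\<Sum>v\<in>r ` {..<K}. n)" by (rule sum_mono) (rule fiber)
  also have "\<dots> = n * card (r ` {..<K})" by simp
  finally show ?thesis .
qed

end


theorem corollary3:
  fixes A :: "int mat" and b c u :: "int vec" and d n :: nat
    and xs :: "nat \<Rightarrow> int vec" and K :: nat
  assumes "A \<in> carrier_mat d n"
    and "totally_unimodular A"
    and "dim_vec b = d" and "dim_vec c = n" and "dim_vec u = n"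
    and "\<forall>i<n. 0 \<le> u $ i"
    and "feasible A b u (xs 0)"
    and "\<forall>k<K. sd_step A b c u (xs k) (xs (Suc k))"
  shows "K \<le> n * card {r. r > 0 \<and> (\<exists>z \<in> circuits A. r = sd_ratio c z)}
         \<and> (sd_stops A b c u (xs K) \<longrightarrow> optimal A b c u (xs K))"
proof -
  note A = assms(1)
  define Q where "Q = (\<lambda>k (g::int vec) (al::int). g \<in> graver A \<and> feasible A b u (xs k + g) \<and>
      (\<forall>g'\<in>graver A. feasible A b u (xs k + g') \<longrightarrow> sd_ratio c g' \<le> sd_ratio c g) \<and>
      sd_ratio c g > 0 \<and> feasible A b u (xs k + al \<cdot>\<^sub>v g) \<and>
      (\<forall>\<beta>::int. feasible A b u (xs k + \<beta> \<cdot>\<^sub>v g) \<longrightarrow> \<beta> \<le> al) \<and>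
      xs (Suc k) = xs k + al \<cdot>\<^sub>v g)"
  have ex: "\<forall>k. \<exists>p. k < K \<longrightarrow> Q k (fst p) (snd p)"
  proof
    fix k
    show "\<exists>p. k < K \<longrightarrow> Q k (fst p) (snd p)"
    proof (cases "k < K")
      case True
      hence "sd_step A b c u (xs k) (xs (Suc k))" using assms(8) by blast
      hence "\<exists>z \<in> graver A. feasible A b u (xs k + z) \<and>
        (\<forall>g \<in> graver A. feasible A b u (xs k + g) \<longrightarrow> sd_ratio c g \<le> sd_ratio c z) \<and>
        sd_ratio c z > 0 \<and>
        (\<exists>\<alpha>::int. feasible A b u (xs k + \<alpha> \<cdot>\<^sub>v z) \<and>
           (\<forall>\<beta>::int. feasible A b u (xs k + \<beta> \<cdot>\<^sub>v z) \<longrightarrow> \<beta> \<le> \<alpha>) \<and>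
           xs (Suc k) = xs k + \<alpha> \<cdot>\<^sub>v z)"
        unfolding sd_step_def of_int_eq_id id_apply by blast
      then obtain z \<alpha> where "Q k z \<alpha>" unfolding Q_def by blast
      thus ?thesis by (intro exI[of _ "(z, \<alpha>)"]) simp
    qed simp
  qed
  obtain f where f: "\<forall>k. k < K \<longrightarrow> Q k (fst (f k)) (snd (f k))" using choice[OF ex] by blast
  define G where "G = (\<lambda>k. fst (f k))"
  define Al where "Al = (\<lambda>k. snd (f k))"
  interpret sdrun A b c u d n xs K G Al
  proof (unfold_locales)
    show "A \<in> carrier_mat d n" by (rule A)
    show "totally_unimodular A" by (rule assms(2))
    show "dim_vec c = n" by (rule assms(4))
    show "feasible A b u (xs 0)" by (rule assms(7))
    fix k assume "k < K"
    hence "Q k (G k) (Al k)" using f by (simp add: G_def Al_def)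
    thus "G k \<in> graver A \<and> feasible A b u (xs k + G k) \<and>
      (\<forall>g'\<in>graver A. feasible A b u (xs k + g') \<longrightarrow> sd_ratio c g' \<le> sd_ratio c (G k)) \<and>
      sd_ratio c (G k) > 0 \<and> feasible A b u (xs k + Al k \<cdot>\<^sub>v G k) \<and>
      (\<forall>\<beta>::int. feasible A b u (xs k + \<beta> \<cdot>\<^sub>v G k) \<longrightarrow> \<beta> \<le> Al k) \<and>
      xs (Suc k) = xs k + Al k \<cdot>\<^sub>v G k" unfolding Q_def by blast
  qed
  let ?R = "{r. r > 0 \<and> (\<exists>z \<in> circuits A. r = sd_ratio c z)}"
  have sub: "r ` {..<K} \<subseteq> ?R"
  proof
    fix x assume "x \<in> r ` {..<K}"
    then obtain k where k: "k < K" "x = r k" by blast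
    show "x \<in> ?R" using Gfacts(5,6)[OF k(1)] k(2) by blast
  qed
  have fin: "finite ?R"
  proof (rule finite_subset)
    show "?R \<subseteq> sd_ratio c ` circuits A" by blast
    show "finite (sd_ratio c ` circuits A)" using finite_circuits[OF A assms(2)] by simp
  qed
  have "K \<le> n * card (r ` {..<K})" by (rule count)
  also have "\<dots> \<le> n * card ?R" using card_mono[OF fin sub] by simp
  finally have part1: "K \<le> n * card ?R" .
  have "feasible A b u (xs K)" using feas by simp
  hence part2: "sd_stops A b c u (xs K) \<longrightarrow> optimal A b c u (xs K)"
    using stops_optimal[OF A assms(4)] by blast
  show ?thesis using part1 part2 by blast
qed

end
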